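(* Let $\mathcal{F}$ be a saturated fusion system on a $p$-group $S$ of nilpotency class two, and let $E$ be an essential subgroup of $\mathcal{F}$. Then $E\trianglelefteq S$, $[O^{p'}(\mathrm{Aut}_{\mathcal{F}}(E)),E]\le Z(E)$, and $E=C_S(Z(E))$.
   Context: $E\le S$ is essential in $\mathcal{F}$ if $E$ is $\mathcal{F}$-centric ($C_S(E\varphi)\le E\varphi$ for all $\varphi\in\mathrm{Hom}_{\mathcal{F}}(E,S)$), fully normalized, and $\mathrm{Out}_{\mathcal{F}}(E)=\mathrm{Aut}_{\mathcal{F}}(E)/\mathrm{Inn}(E)$ has a strongly $p$-embedded subgroup. *)

theory Defs
  imports "HOL-Algebra.Algebra" "HOL-Computational_Algebra.Primes"
begin

text \<open>Conjugation map c_g restricted to P, written on the right: x c_g = g^-1 x g.\<close>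
definition cmap :: "('a,'b) monoid_scheme \<Rightarrow> 'a \<Rightarrow> 'a set \<Rightarrow> ('a \<Rightarrow> 'a)" where
  "cmap G g P = (\<lambda>x\<in>P. inv\<^bsub>G\<^esub> g \<otimes>\<^bsub>G\<^esub> x \<otimes>\<^bsub>G\<^esub> g)"

definition centraliser :: "('a,'b) monoid_scheme \<Rightarrow> 'a set \<Rightarrow> 'a set" where
  "centraliser G A = {g \<in> carrier G. \<forall>x\<in>A. g \<otimes>\<^bsub>G\<^esub> x = x \<otimes>\<^bsub>G\<^esub> g}"

definition normaliser :: "('a,'b) monoid_scheme \<Rightarrow> 'a set \<Rightarrow> 'a set" where
  "normaliser G P = {g \<in> carrier G. inv\<^bsub>G\<^esub> g <#\<^bsub>G\<^esub> P #>\<^bsub>G\<^esub> g = P}"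

definition centre :: "('a,'b) monoid_scheme \<Rightarrow> 'a set \<Rightarrow> 'a set" where
  "centre G P = {x \<in> P. \<forall>y\<in>P. x \<otimes>\<^bsub>G\<^esub> y = y \<otimes>\<^bsub>G\<^esub> x}"

definition p_group :: "nat \<Rightarrow> ('a,'b) monoid_scheme \<Rightarrow> bool" where
  "p_group p G \<longleftrightarrow> group G \<and> finite (carrier G) \<and> (\<exists>n. card (carrier G) = p ^ n)"

text \<open>Lower central series: gamma_1 = G (index 0), gamma_{i+1} = [gamma_i, G].\<close>
fun lower_central :: "('a,'b) monoid_scheme \<Rightarrow> nat \<Rightarrow> 'a set" where
  "lower_central G 0 = carrier G"
| "lower_central G (Suc n) = generate G
     {x \<otimes>\<^bsub>G\<^esub> y \<otimes>\<^bsub>G\<^esub> inv\<^bsub>G\<^esub> x \<otimes>\<^bsub>G\<^esub> inv\<^bsub>G\<^esub> y | x y. x \<in> lower_central G n \<and> y \<in> carrier G}"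

definition nilpotency_class :: "('a,'b) monoid_scheme \<Rightarrow> nat \<Rightarrow> bool" where
  "nilpotency_class G c \<longleftrightarrow> lower_central G c = {\<one>\<^bsub>G\<^esub>} \<and> (\<forall>k<c. lower_central G k \<noteq> {\<one>\<^bsub>G\<^esub>})"

definition sylow_subgroup :: "nat \<Rightarrow> ('a,'b) monoid_scheme \<Rightarrow> 'a set \<Rightarrow> bool" where
  "sylow_subgroup p G Q \<longleftrightarrow> subgroup Q G \<and> card Q = p ^ multiplicity p (order G)"

definition O_p'_upper :: "nat \<Rightarrow> ('a,'b) monoid_scheme \<Rightarrow> 'a set" where
  "O_p'_upper p G = \<Inter>{N. N \<lhd> G \<and> \<not> p dvd (card (carrier G) div card N)}"

definition strongly_p_embedded :: "nat \<Rightarrow> ('a,'b) monoid_scheme \<Rightarrow> 'a set \<Rightarrow> bool" where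
  "strongly_p_embedded p G H \<longleftrightarrow> subgroup H G \<and> H \<noteq> carrier G \<and> p dvd card H \<and>
     (\<forall>g \<in> carrier G - H. \<not> p dvd card (H \<inter> (g <#\<^bsub>G\<^esub> H #>\<^bsub>G\<^esub> inv\<^bsub>G\<^esub> g)))"

definition has_strongly_p_embedded :: "nat \<Rightarrow> ('a,'b) monoid_scheme \<Rightarrow> bool" where
  "has_strongly_p_embedded p G \<longleftrightarrow> (\<exists>H. strongly_p_embedded p G H)"

text \<open>A fusion system on S is given by F P Q = Hom_F(P,Q), a set of maps P -> Q
  (extensional functions on P).\<close>
type_synonym 'a fusion = "'a set \<Rightarrow> 'a set \<Rightarrow> ('a \<Rightarrow> 'a) set"

definition hom_S :: "('a,'b) monoid_scheme \<Rightarrow> 'a set \<Rightarrow> 'a set \<Rightarrow> ('a \<Rightarrow> 'a) set" where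
  "hom_S G P Q = {cmap G g P | g. g \<in> carrier G \<and> cmap G g P ` P \<subseteq> Q}"

definition aut_S :: "('a,'b) monoid_scheme \<Rightarrow> 'a set \<Rightarrow> ('a \<Rightarrow> 'a) set" where
  "aut_S G P = hom_S G P P"

definition inn :: "('a,'b) monoid_scheme \<Rightarrow> 'a set \<Rightarrow> ('a \<Rightarrow> 'a) set" where
  "inn G P = {cmap G g P | g. g \<in> P}"

definition inj_maps :: "('a,'b) monoid_scheme \<Rightarrow> 'a set \<Rightarrow> 'a set \<Rightarrow> ('a \<Rightarrow> 'a) set" where
  "inj_maps G P Q = {\<phi>. \<phi> \<in> extensional P \<and> \<phi> \<in> hom (G\<lparr>carrier := P\<rparr>) (G\<lparr>carrier := Q\<rparr>)
                        \<and> inj_on \<phi> P}"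

definition fusion_system :: "('a,'b) monoid_scheme \<Rightarrow> 'a fusion \<Rightarrow> bool" where
  "fusion_system G F \<longleftrightarrow>
     (\<forall>P Q. subgroup P G \<and> subgroup Q G \<longrightarrow> hom_S G P Q \<subseteq> F P Q \<and> F P Q \<subseteq> inj_maps G P Q) \<and>
     (\<forall>P Q R \<phi> \<psi>. subgroup P G \<and> subgroup Q G \<and> subgroup R G \<and> \<phi> \<in> F P Q \<and> \<psi> \<in> F Q R
        \<longrightarrow> compose P \<psi> \<phi> \<in> F P R) \<and>
     (\<forall>P Q \<phi>. subgroup P G \<and> subgroup Q G \<and> \<phi> \<in> F P Q \<longrightarrow>
        \<phi> \<in> F P (\<phi> ` P) \<and> restrict (inv_into P \<phi>) (\<phi> ` P) \<in> F (\<phi> ` P) P)"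

definition aut_F :: "'a fusion \<Rightarrow> 'a set \<Rightarrow> ('a \<Rightarrow> 'a) monoid" where
  "aut_F F P = (BijGroup P)\<lparr>carrier := F P P\<rparr>"

definition out_F :: "('a,'b) monoid_scheme \<Rightarrow> 'a fusion \<Rightarrow> 'a set \<Rightarrow> ('a \<Rightarrow> 'a) set monoid" where
  "out_F G F P = aut_F F P Mod inn G P"

definition F_conjugates :: "('a,'b) monoid_scheme \<Rightarrow> 'a fusion \<Rightarrow> 'a set \<Rightarrow> 'a set set" where
  "F_conjugates G F P = {\<phi> ` P | \<phi>. \<phi> \<in> F P (carrier G)}"

definition fully_normalized :: "('a,'b) monoid_scheme \<Rightarrow> 'a fusion \<Rightarrow> 'a set \<Rightarrow> bool" where
  "fully_normalized G F P \<longleftrightarrow>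
     (\<forall>Q \<in> F_conjugates G F P. card (normaliser G Q) \<le> card (normaliser G P))"

definition fully_centralized :: "('a,'b) monoid_scheme \<Rightarrow> 'a fusion \<Rightarrow> 'a set \<Rightarrow> bool" where
  "fully_centralized G F P \<longleftrightarrow>
     (\<forall>Q \<in> F_conjugates G F P. card (centraliser G Q) \<le> card (centraliser G P))"

text \<open>N_phi = { g in N_S(P) | phi^-1 c_g phi in Aut_S(P phi) } (right actions).\<close>
definition N_phi :: "('a,'b) monoid_scheme \<Rightarrow> 'a set \<Rightarrow> ('a \<Rightarrow> 'a) \<Rightarrow> 'a set" where
  "N_phi G P \<phi> = {g \<in> normaliser G P.
      compose (\<phi> ` P) (compose P \<phi> (cmap G g P)) (restrict (inv_into P \<phi>) (\<phi> ` P))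
        \<in> aut_S G (\<phi> ` P)}"

text \<open>Saturation (Broto-Levi-Oliver / Aschbacher-Kessar-Oliver Def. I.2.2).\<close>
definition saturated :: "nat \<Rightarrow> ('a,'b) monoid_scheme \<Rightarrow> 'a fusion \<Rightarrow> bool" where
  "saturated p G F \<longleftrightarrow> fusion_system G F \<and>
     (\<forall>P. subgroup P G \<and> fully_normalized G F P \<longrightarrow>
        fully_centralized G F P \<and> sylow_subgroup p (aut_F F P) (aut_S G P)) \<and>
     (\<forall>P \<phi>. subgroup P G \<and> \<phi> \<in> F P (carrier G) \<and> fully_centralized G F (\<phi> ` P) \<longrightarrow>
        (\<exists>\<psi> \<in> F (N_phi G P \<phi>) (carrier G). \<forall>x\<in>P. \<psi> x = \<phi> x))"

definition F_centric :: "('a,'b) monoid_scheme \<Rightarrow> 'a fusion \<Rightarrow> 'a set \<Rightarrow> bool" where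
  "F_centric G F E \<longleftrightarrow> (\<forall>\<phi> \<in> F E (carrier G). centraliser G (\<phi> ` E) \<subseteq> \<phi> ` E)"

definition essential :: "nat \<Rightarrow> ('a,'b) monoid_scheme \<Rightarrow> 'a fusion \<Rightarrow> 'a set \<Rightarrow> bool" where
  "essential p G F E \<longleftrightarrow> subgroup E G \<and> F_centric G F E \<and> fully_normalized G F E \<and>
     has_strongly_p_embedded p (out_F G F E)"

definition action_commutator :: "('a,'b) monoid_scheme \<Rightarrow> ('a \<Rightarrow> 'a) set \<Rightarrow> 'a set \<Rightarrow> 'a set" where
  "action_commutator G A E = generate (G\<lparr>carrier := E\<rparr>)
     {inv\<^bsub>G\<^esub> x \<otimes>\<^bsub>G\<^esub> \<alpha> x | \<alpha> x. \<alpha> \<in> A \<and> x \<in> E}"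

end

theory Submission
  imports Defs "HOL-Algebra.Algebra" "HOL-Computational_Algebra.Primes"
begin


lemma (in group) mi1: "x \<in> carrier G \<Longrightarrow> y \<in> carrier G \<Longrightarrow> x \<otimes> (inv x \<otimes> y) = y"
  by (simp add: m_assoc[symmetric])
lemma (in group) mi2: "x \<in> carrier G \<Longrightarrow> y \<in> carrier G \<Longrightarrow> inv x \<otimes> (x \<otimes> y) = y"
  by (simp add: m_assoc[symmetric])

lemma lmult_action:
  fixes Y :: "('a,'c) monoid_scheme" and Q :: "('b,'d) monoid_scheme"
  assumes Y: "group Y" and Q: "group Q" and h: "h \<in> hom Q Y"
    and Om: "W \<subseteq> Pow (carrier Y)"
    and cl: "\<And>q A. q \<in> carrier Q \<Longrightarrow> A \<in> W \<Longrightarrow> h q <#\<^bsub>Y\<^esub> A \<in> W"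
  shows "group_action Q W (\<lambda>q. \<lambda>A\<in>W. h q <#\<^bsub>Y\<^esub> A)"
proof -
  interpret Y: group Y by fact
  interpret Q: group Q by fact
  interpret gh: group_hom Q Y h using h by (simp add: group_hom_def group_hom_axioms_def Y Q)
  have hc: "h q \<in> carrier Y" if "q \<in> carrier Q" for q using that by simp
  have bka: "h (inv\<^bsub>Q\<^esub> q) <#\<^bsub>Y\<^esub> (h q <#\<^bsub>Y\<^esub> A) = A" if "q \<in> carrier Q" "A \<in> W" for q A
  proof -
    have "A \<subseteq> carrier Y" using Om that by auto
    then show ?thesis using that
      by (simp add: Y.lcos_m_assoc Y.lcos_mult_one)
  qed
  have bkb: "h q <#\<^bsub>Y\<^esub> (h (inv\<^bsub>Q\<^esub> q) <#\<^bsub>Y\<^esub> A) = A" if "q \<in> carrier Q" "A \<in> W" for q A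
  proof -
    have "A \<subseteq> carrier Y" using Om that by auto
    then show ?thesis using that
      by (simp add: Y.lcos_m_assoc Y.lcos_mult_one)
  qed
  have bij: "(\<lambda>A\<in>W. h q <#\<^bsub>Y\<^esub> A) \<in> Bij W" if q: "q \<in> carrier Q" for q
  proof -
    have "inj_on (\<lambda>A. h q <#\<^bsub>Y\<^esub> A) W"
      by (rule inj_onI) (metis bka q)
    moreover have "(\<lambda>A. h q <#\<^bsub>Y\<^esub> A) ` W = W"
    proof
      show "(\<lambda>A. h q <#\<^bsub>Y\<^esub> A) ` W \<subseteq> W" using cl q by auto
      show "W \<subseteq> (\<lambda>A. h q <#\<^bsub>Y\<^esub> A) ` W"
      proof
        fix A assume A: "A \<in> W"
        have "h (inv\<^bsub>Q\<^esub> q) <#\<^bsub>Y\<^esub> A \<in> W" using cl[of "inv\<^bsub>Q\<^esub> q" A] A q by (simp del: gh.hom_inv)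
        then show "A \<in> (\<lambda>A. h q <#\<^bsub>Y\<^esub> A) ` W" using bkb[OF q A] by (metis image_eqI)
      qed
    qed
    ultimately show ?thesis unfolding Bij_def bij_betw_def
      by (simp add: inj_on_def)
  qed
  show ?thesis
    unfolding group_action_def group_hom_def group_hom_axioms_def
  proof (intro conjI)
    show "group Q" by fact
    show "group (BijGroup W)" by (rule group_BijGroup)
    show "(\<lambda>q. \<lambda>A\<in>W. h q <#\<^bsub>Y\<^esub> A) \<in> hom Q (BijGroup W)"
    proof (rule homI)
      fix q assume "q \<in> carrier Q"
      then show "(\<lambda>A\<in>W. h q <#\<^bsub>Y\<^esub> A) \<in> carrier (BijGroup W)"
        using bij by (simp add: BijGroup_def)
    next
      fix q r assume q: "q \<in> carrier Q" and r: "r \<in> carrier Q"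
      have "(\<lambda>A\<in>W. h (q \<otimes>\<^bsub>Q\<^esub> r) <#\<^bsub>Y\<^esub> A)
          = compose W (\<lambda>A\<in>W. h q <#\<^bsub>Y\<^esub> A) (\<lambda>A\<in>W. h r <#\<^bsub>Y\<^esub> A)"
      proof (rule ext)
        fix A show "(\<lambda>A\<in>W. h (q \<otimes>\<^bsub>Q\<^esub> r) <#\<^bsub>Y\<^esub> A) A
          = compose W (\<lambda>A\<in>W. h q <#\<^bsub>Y\<^esub> A) (\<lambda>A\<in>W. h r <#\<^bsub>Y\<^esub> A) A"
        proof (cases "A \<in> W")
          case True
          then have "A \<subseteq> carrier Y" using Om by auto
          then show ?thesis using True q r cl[OF r True]
            by (simp add: compose_def Y.lcos_m_assoc)
        qed (simp add: compose_def)
      qed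
      then show "(\<lambda>A\<in>W. h (q \<otimes>\<^bsub>Q\<^esub> r) <#\<^bsub>Y\<^esub> A)
          = (\<lambda>A\<in>W. h q <#\<^bsub>Y\<^esub> A) \<otimes>\<^bsub>BijGroup W\<^esub> (\<lambda>A\<in>W. h r <#\<^bsub>Y\<^esub> A)"
        using bij[OF q] bij[OF r] by (simp add: BijGroup_def)
    qed
  qed
qed

lemma (in group_action) fix_mod:
  assumes fG: "finite (carrier G)" and fE: "finite E" and cG: "card (carrier G) = p ^ a"
    and p: "Factorial_Ring.prime p"
  shows "card E mod p = card {x\<in>E. \<forall>g\<in>carrier G. \<phi> g x = x} mod p"
proof -
  let ?O = "orbits G E \<phi>"
  let ?Fix = "{x\<in>E. \<forall>g\<in>carrier G. \<phi> g x = x}"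
  have p1: "p > 1" using p prime_gt_1_nat by blast
  have finO: "finite ?O" using fE unfolding orbits_def by simp
  have cardE: "card E = (\<Sum>orb\<in>?O. card orb)"
  proof -
    have "(\<Sum>orb\<in>?O. card orb) = (\<Sum>orb\<in>?O. \<Sum>x\<in>orb. (1::nat))"
      by (rule sum.cong) auto
    also have "\<dots> = (\<Sum>x\<in>E. 1)" by (rule disjoint_sum[OF fE])
    finally show ?thesis by simp
  qed
  have orbsub: "orb \<subseteq> E" if "orb \<in> ?O" for orb
    using that orbits_coverture by blast
  have cm: "card orb mod p = (if card orb = 1 then 1 else 0)" if o: "orb \<in> ?O" for orb
  proof -
    obtain x where x: "x \<in> E" "orb = orbit G \<phi> x" using o unfolding orbits_def by blast
    have "card orb dvd p ^ a"
      using orbit_stabilizer_theorem[OF x(1)] x(2) cG unfolding order_def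
      by (metis dvd_triv_left)
    then obtain i where i: "card orb = p ^ i" using divides_primepow_nat[OF p] by blast
    show ?thesis
    proof (cases i)
      case 0 then show ?thesis using i p1 by simp
    next
      case (Suc j) then show ?thesis using i p1 by simp
    qed
  qed
  have "card E mod p = (\<Sum>orb\<in>?O. card orb mod p) mod p"
    unfolding cardE by (simp add: mod_sum_eq)
  also have "(\<Sum>orb\<in>?O. card orb mod p) = (\<Sum>orb\<in>?O. (if card orb = 1 then 1 else 0))"
    by (rule sum.cong) (auto simp: cm)
  also have "\<dots> = card {orb\<in>?O. card orb = 1}"
    using finO by (simp add: sum.If_cases Int_def)
  also have "card {orb\<in>?O. card orb = 1} = card ?Fix"
  proof -
    have "bij_betw (\<lambda>x. orbit G \<phi> x) ?Fix {orb\<in>?O. card orb = 1}"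
    proof (rule bij_betwI')
      fix x y assume x: "x \<in> ?Fix" and y: "y \<in> ?Fix"
      have ox: "orbit G \<phi> x = {x}" using x orbit_refl[of x] unfolding orbit_def by force
      have oy: "orbit G \<phi> y = {y}" using y orbit_refl[of y] unfolding orbit_def by force
      show "(orbit G \<phi> x = orbit G \<phi> y) = (x = y)" using ox oy by auto
    next
      fix x assume x: "x \<in> ?Fix"
      have ox: "orbit G \<phi> x = {x}" using x orbit_refl[of x] unfolding orbit_def by force
      show "orbit G \<phi> x \<in> {orb\<in>?O. card orb = 1}" using ox x unfolding orbits_def by auto
    next
      fix orb assume o: "orb \<in> {orb\<in>?O. card orb = 1}"
      then obtain x where x: "x \<in> E" "orb = orbit G \<phi> x" unfolding orbits_def by blast
      have "x \<in> orb" using orbit_refl x by simp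
      then have ob: "orb = {x}" using o by (metis (mono_tags, lifting) card_1_singletonE mem_Collect_eq singletonD)
      have "x \<in> ?Fix"
      proof -
        have "\<phi> g x = x" if "g \<in> carrier G" for g
        proof -
          have "\<phi> g x \<in> orb" using x that unfolding orbit_def by blast
          then show ?thesis using ob by simp
        qed
        then show ?thesis using x by simp
      qed
      then show "\<exists>x\<in>?Fix. orb = orbit G \<phi> x" using x by blast
    qed
    then show ?thesis by (rule bij_betw_same_card[symmetric])
  qed
  finally show ?thesis .
qed

lemma lcos_in_sub:
  fixes Y :: "('a,'c) monoid_scheme"
  assumes Y: "group Y" and H: "subgroup H Y" and x: "x \<in> H"
  shows "x <#\<^bsub>Y\<^esub> H = H"
proof -
  interpret Y: group Y by fact
  have xc: "x \<in> carrier Y" using subgroup.mem_carrier[OF H x] .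
  show ?thesis
  proof
    show "x <#\<^bsub>Y\<^esub> H \<subseteq> H"
    proof
      fix z assume "z \<in> x <#\<^bsub>Y\<^esub> H"
      then obtain y where y: "y \<in> H" "z = x \<otimes>\<^bsub>Y\<^esub> y" unfolding l_coset_def by blast
      then show "z \<in> H" using subgroup.m_closed[OF H x y(1)] by simp
    qed
    show "H \<subseteq> x <#\<^bsub>Y\<^esub> H"
    proof
      fix y assume y: "y \<in> H"
      have yc: "y \<in> carrier Y" using subgroup.mem_carrier[OF H y] .
      have "inv\<^bsub>Y\<^esub> x \<otimes>\<^bsub>Y\<^esub> y \<in> H" using subgroup.m_closed[OF H subgroup.m_inv_closed[OF H x] y] .
      moreover have "y = x \<otimes>\<^bsub>Y\<^esub> (inv\<^bsub>Y\<^esub> x \<otimes>\<^bsub>Y\<^esub> y)"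
        using xc yc by (metis Y.inv_closed Y.l_one Y.m_assoc Y.r_inv)
      ultimately show "y \<in> x <#\<^bsub>Y\<^esub> H" unfolding l_coset_def by blast
    qed
  qed
qed

lemma sub_card_dvd:
  fixes Y :: "('a,'c) monoid_scheme"
  assumes Y: "group Y" and A: "subgroup A Y" and B: "subgroup B Y" and AB: "A \<subseteq> B"
  shows "card A dvd card B"
proof -
  interpret Y: group Y by fact
  have "subgroup A (Y\<lparr>carrier := B\<rparr>)" using Y.subgroup_incl[OF A B AB] .
  moreover have "group (Y\<lparr>carrier := B\<rparr>)" using Y.subgroup_imp_group[OF B] .
  ultimately have "card (rcosets\<^bsub>Y\<lparr>carrier := B\<rparr>\<^esub> A) * card A = order (Y\<lparr>carrier := B\<rparr>)"
    using group.lagrange by metis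
  moreover have "order (Y\<lparr>carrier := B\<rparr>) = card B" by (simp add: order_def)
  ultimately show ?thesis by (metis dvd_triv_right)
qed

lemma card_img_dvd:
  fixes Y :: "('a,'c) monoid_scheme" and Q :: "('b,'d) monoid_scheme"
  assumes Y: "group Y" and Q: "group Q" and h: "h \<in> hom Q Y"
  shows "card (h ` carrier Q) dvd order Q"
proof -
  interpret Y: group Y by fact
  interpret Q: group Q by fact
  interpret gh: group_hom Q Y h using h by (simp add: group_hom_def group_hom_axioms_def Y Q)
  let ?W = "(\<lambda>y. {y}) ` (h ` carrier Q)"
  have lc: "a <#\<^bsub>Y\<^esub> {b} = {a \<otimes>\<^bsub>Y\<^esub> b}" for a b unfolding l_coset_def by simp
  have act: "group_action Q ?W (\<lambda>q. \<lambda>A\<in>?W. h q <#\<^bsub>Y\<^esub> A)"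
  proof (rule lmult_action[OF Y Q h])
    show "?W \<subseteq> Pow (carrier Y)" by auto
    fix q A assume q: "q \<in> carrier Q" and A: "A \<in> ?W"
    then obtain r where r: "r \<in> carrier Q" "A = {h r}" by auto
    then have "h q <#\<^bsub>Y\<^esub> A = {h (q \<otimes>\<^bsub>Q\<^esub> r)}" using q lc by simp
    moreover have "h (q \<otimes>\<^bsub>Q\<^esub> r) \<in> h ` carrier Q" using q r by blast
    ultimately show "h q <#\<^bsub>Y\<^esub> A \<in> ?W" by (metis image_eqI)
  qed
  interpret act: group_action Q ?W "\<lambda>q. \<lambda>A\<in>?W. h q <#\<^bsub>Y\<^esub> A" by fact
  have "\<one>\<^bsub>Y\<^esub> \<in> h ` carrier Q" using gh.hom_one Q.one_closed by (metis image_eqI)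
  then have oneW: "{\<one>\<^bsub>Y\<^esub>} \<in> ?W" by (rule imageI)
  have orb: "orbit Q (\<lambda>q. \<lambda>A\<in>?W. h q <#\<^bsub>Y\<^esub> A) {\<one>\<^bsub>Y\<^esub>} = ?W"
  proof -
    have e: "(\<lambda>A\<in>?W. h q <#\<^bsub>Y\<^esub> A) {\<one>\<^bsub>Y\<^esub>} = {h q}" if "q \<in> carrier Q" for q
    proof -
      have hq: "h q \<in> carrier Y" using that by simp
      have "(\<lambda>A\<in>?W. h q <#\<^bsub>Y\<^esub> A) {\<one>\<^bsub>Y\<^esub>} = h q <#\<^bsub>Y\<^esub> {\<one>\<^bsub>Y\<^esub>}"
        using oneW by (rule restrict_apply')
      also have "\<dots> = {h q}" unfolding lc using hq by simp
      finally show ?thesis .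
    qed
    have "orbit Q (\<lambda>q. \<lambda>A\<in>?W. h q <#\<^bsub>Y\<^esub> A) {\<one>\<^bsub>Y\<^esub>} = {{h q} | q. q \<in> carrier Q}"
      unfolding orbit_def
    proof (intro equalityI subsetI)
      fix v assume "v \<in> {(\<lambda>A\<in>?W. h g <#\<^bsub>Y\<^esub> A) {\<one>\<^bsub>Y\<^esub>} |g. g \<in> carrier Q}"
      then obtain g where g: "g \<in> carrier Q" "v = (\<lambda>A\<in>?W. h g <#\<^bsub>Y\<^esub> A) {\<one>\<^bsub>Y\<^esub>}" by blast
      then have "v = {h g}" using e[OF g(1)] by simp
      then show "v \<in> {{h q} | q. q \<in> carrier Q}" using g(1) by blast
    next
      fix v assume "v \<in> {{h q} | q. q \<in> carrier Q}"
      then obtain g where g: "g \<in> carrier Q" "v = {h g}" by blast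
      then have "v = (\<lambda>A\<in>?W. h g <#\<^bsub>Y\<^esub> A) {\<one>\<^bsub>Y\<^esub>}" using e[OF g(1)] by simp
      then show "v \<in> {(\<lambda>A\<in>?W. h g <#\<^bsub>Y\<^esub> A) {\<one>\<^bsub>Y\<^esub>} |g. g \<in> carrier Q}" using g(1) by blast
    qed
    also have "\<dots> = ?W" by blast
    finally show ?thesis .
  qed
  have "card ?W = card (h ` carrier Q)" by (rule card_image) (simp add: inj_on_def)
  moreover have "card (orbit Q (\<lambda>q. \<lambda>A\<in>?W. h q <#\<^bsub>Y\<^esub> A) {\<one>\<^bsub>Y\<^esub>})
     * card (stabilizer Q (\<lambda>q. \<lambda>A\<in>?W. h q <#\<^bsub>Y\<^esub> A) {\<one>\<^bsub>Y\<^esub>}) = order Q"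
    by (rule act.orbit_stabilizer_theorem[OF oneW])
  ultimately show ?thesis unfolding orb by (metis dvd_triv_left)
qed

lemma mem_conj:
  fixes Y :: "('a,'c) monoid_scheme"
  assumes "z = g \<otimes>\<^bsub>Y\<^esub> y \<otimes>\<^bsub>Y\<^esub> inv\<^bsub>Y\<^esub> g" "y \<in> H"
  shows "z \<in> g <#\<^bsub>Y\<^esub> H #>\<^bsub>Y\<^esub> inv\<^bsub>Y\<^esub> g"
  using assms unfolding l_coset_def r_coset_def by blast

lemma no_normal_p_img:
  fixes Y :: "('a,'c) monoid_scheme" and Q :: "('b,'d) monoid_scheme"
  assumes Y: "group Y" and fY: "finite (carrier Y)" and p: "Factorial_Ring.prime p"
    and H: "subgroup H Y" and Hne: "H \<noteq> carrier Y" and pH: "p dvd card H"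
    and emb: "\<forall>g\<in>carrier Y - H. \<not> p dvd card (H \<inter> (g <#\<^bsub>Y\<^esub> H #>\<^bsub>Y\<^esub> inv\<^bsub>Y\<^esub> g))"
    and Q: "group Q" and cQ: "card (carrier Q) = p ^ a"
    and h: "h \<in> hom Q Y"
    and nrm: "\<And>y q. y \<in> carrier Y \<Longrightarrow> q \<in> carrier Q \<Longrightarrow>
               y \<otimes>\<^bsub>Y\<^esub> h q \<otimes>\<^bsub>Y\<^esub> inv\<^bsub>Y\<^esub> y \<in> h ` carrier Q"
  shows "h ` carrier Q = {\<one>\<^bsub>Y\<^esub>}"
proof (rule ccontr)
  assume ne: "h ` carrier Q \<noteq> {\<one>\<^bsub>Y\<^esub>}"
  interpret Y: group Y by fact
  interpret Q: group Q by fact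
  interpret gh: group_hom Q Y h using h by (simp add: group_hom_def group_hom_axioms_def Y Q)
  define N where "N = h ` carrier Q"
  have p1: "p > 1" using p prime_gt_1_nat by blast
  have Nsub: "subgroup N Y" unfolding N_def by (rule gh.img_is_subgroup)
  have Hc: "H \<subseteq> carrier Y" using subgroup.subset[OF H] .
  have fH: "finite H" using fY Hc finite_subset by blast
  have conjsub: "subgroup (H \<inter> (g <#\<^bsub>Y\<^esub> H #>\<^bsub>Y\<^esub> inv\<^bsub>Y\<^esub> g)) Y" if g: "g \<in> carrier Y" for g
    using Y.subgroups_Inter_pair[OF H Y.subgroup_conjugation_is_surj2[OF g H]] .
  have "card N dvd order Q" unfolding N_def by (rule card_img_dvd[OF Y Q h])
  then have "card N dvd p ^ a" using cQ unfolding order_def by simp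
  then obtain k where k: "card N = p ^ k" using divides_primepow_nat[OF p] by blast
  have oneN: "\<one>\<^bsub>Y\<^esub> \<in> N" using subgroup.one_closed[OF Nsub] .
  have fN: "finite N" using fY subgroup.subset[OF Nsub] finite_subset by blast
  have "card N \<noteq> 1"
  proof
    assume "card N = 1"
    then obtain z where "N = {z}" using card_1_singletonE by blast
    then show False using oneN ne unfolding N_def by simp
  qed
  then have "k \<noteq> 0" using k by auto
  then have pN: "p dvd card N" using k by (simp add: dvd_power)
  show False
  proof (cases "N \<subseteq> H")
    case True
    obtain g where g: "g \<in> carrier Y" "g \<notin> H" using Hne Hc by blast
    have "N \<subseteq> g <#\<^bsub>Y\<^esub> H #>\<^bsub>Y\<^esub> inv\<^bsub>Y\<^esub> g"
    proof
      fix n assume n: "n \<in> N"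
      then obtain q where q: "q \<in> carrier Q" "n = h q" unfolding N_def by blast
      have nc: "n \<in> carrier Y" using q by simp
      have ig: "inv\<^bsub>Y\<^esub> g \<in> carrier Y" using g(1) by simp
      have "inv\<^bsub>Y\<^esub> g \<otimes>\<^bsub>Y\<^esub> h q \<otimes>\<^bsub>Y\<^esub> inv\<^bsub>Y\<^esub> (inv\<^bsub>Y\<^esub> g) \<in> N"
        unfolding N_def by (rule nrm[OF ig q(1)])
      then have "inv\<^bsub>Y\<^esub> g \<otimes>\<^bsub>Y\<^esub> n \<otimes>\<^bsub>Y\<^esub> g \<in> N"
        using q(2) g(1) by (simp add: Y.inv_inv)
      then have m: "inv\<^bsub>Y\<^esub> g \<otimes>\<^bsub>Y\<^esub> n \<otimes>\<^bsub>Y\<^esub> g \<in> H" using True by blast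
      have "n = g \<otimes>\<^bsub>Y\<^esub> (inv\<^bsub>Y\<^esub> g \<otimes>\<^bsub>Y\<^esub> n \<otimes>\<^bsub>Y\<^esub> g) \<otimes>\<^bsub>Y\<^esub> inv\<^bsub>Y\<^esub> g"
        using g(1) nc by (simp add: Y.m_assoc Y.mi1)
      then show "n \<in> g <#\<^bsub>Y\<^esub> H #>\<^bsub>Y\<^esub> inv\<^bsub>Y\<^esub> g" using m by (rule mem_conj)
    qed
    then have "N \<subseteq> H \<inter> (g <#\<^bsub>Y\<^esub> H #>\<^bsub>Y\<^esub> inv\<^bsub>Y\<^esub> g)" using True by blast
    then have "card N dvd card (H \<inter> (g <#\<^bsub>Y\<^esub> H #>\<^bsub>Y\<^esub> inv\<^bsub>Y\<^esub> g))"
      by (rule sub_card_dvd[OF Y Nsub conjsub[OF g(1)]])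
    then have "p dvd card (H \<inter> (g <#\<^bsub>Y\<^esub> H #>\<^bsub>Y\<^esub> inv\<^bsub>Y\<^esub> g))" using pN dvd_trans by blast
    then show False using emb g by blast
  next
    case False
    then obtain n0 where n0: "n0 \<in> N" "n0 \<notin> H" by blast
    have fQ: "finite (carrier Q)" using cQ p1 card.infinite by (metis less_irrefl_nat not_one_less_zero power_eq_0_iff zero_less_one less_trans)
    define W where "W = (\<lambda>q. h q <#\<^bsub>Y\<^esub> H) ` carrier Q"
    have Wsub: "W \<subseteq> Pow (carrier Y)"
    proof
      fix A assume "A \<in> W"
      then obtain q where q: "q \<in> carrier Q" "A = h q <#\<^bsub>Y\<^esub> H" unfolding W_def by blast
      have "h q \<in> carrier Y" using q(1) by simp
      then show "A \<in> Pow (carrier Y)" using Y.l_coset_subset_G[OF Hc] q(2) by simp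
    qed
    have fW: "finite W" unfolding W_def using fQ by simp
    have lcq: "h q' <#\<^bsub>Y\<^esub> (h q <#\<^bsub>Y\<^esub> H) = h (q' \<otimes>\<^bsub>Q\<^esub> q) <#\<^bsub>Y\<^esub> H"
      if "q \<in> carrier Q" "q' \<in> carrier Q" for q q'
      using that Hc by (simp add: Y.lcos_m_assoc)
    have act1: "group_action Q W (\<lambda>q. \<lambda>A\<in>W. h q <#\<^bsub>Y\<^esub> A)"
    proof (rule lmult_action[OF Y Q h Wsub])
      fix q A assume q: "q \<in> carrier Q" and A: "A \<in> W"
      then obtain r where r: "r \<in> carrier Q" "A = h r <#\<^bsub>Y\<^esub> H" unfolding W_def by blast
      have "h q <#\<^bsub>Y\<^esub> A = h (q \<otimes>\<^bsub>Q\<^esub> r) <#\<^bsub>Y\<^esub> H" using lcq[OF r(1) q] r(2) by simp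
      moreover have "q \<otimes>\<^bsub>Q\<^esub> r \<in> carrier Q" using q r(1) by simp
      ultimately show "h q <#\<^bsub>Y\<^esub> A \<in> W" unfolding W_def by blast
    qed
    interpret act1: group_action Q W "\<lambda>q. \<lambda>A\<in>W. h q <#\<^bsub>Y\<^esub> A" by fact
    have HeqH: "h \<one>\<^bsub>Q\<^esub> <#\<^bsub>Y\<^esub> H = H" using Hc by (simp add: Y.lcos_mult_one)
    have HW: "H \<in> W"
    proof -
      have "h \<one>\<^bsub>Q\<^esub> <#\<^bsub>Y\<^esub> H \<in> W" unfolding W_def by blast
      then show ?thesis using HeqH by simp
    qed
    have orbW: "orbit Q (\<lambda>q. \<lambda>A\<in>W. h q <#\<^bsub>Y\<^esub> A) H = W"
    proof -
      have e: "(\<lambda>A\<in>W. h q <#\<^bsub>Y\<^esub> A) H = h q <#\<^bsub>Y\<^esub> H" for q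
        using HW by (rule restrict_apply')
      have "orbit Q (\<lambda>q. \<lambda>A\<in>W. h q <#\<^bsub>Y\<^esub> A) H = {h g <#\<^bsub>Y\<^esub> H | g. g \<in> carrier Q}"
        unfolding orbit_def e by simp
      also have "\<dots> = W" unfolding W_def by blast
      finally show ?thesis .
    qed
    have "card W * card (stabilizer Q (\<lambda>q. \<lambda>A\<in>W. h q <#\<^bsub>Y\<^esub> A) H) = order Q"
      using act1.orbit_stabilizer_theorem[OF HW] unfolding orbW .
    then have "card W dvd p ^ a" using cQ unfolding order_def by (metis dvd_triv_left)
    then obtain j where j: "card W = p ^ j" using divides_primepow_nat[OF p] by blast
    obtain q0 where q0: "q0 \<in> carrier Q" "n0 = h q0" using n0(1) unfolding N_def by blast
    have n0c: "n0 \<in> carrier Y" using q0 by simp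
    have n0W: "n0 <#\<^bsub>Y\<^esub> H \<in> W" unfolding W_def using q0 by blast
    have "n0 \<in> n0 <#\<^bsub>Y\<^esub> H" using Y.lcos_self[OF n0c H] .
    then have "n0 <#\<^bsub>Y\<^esub> H \<noteq> H" using n0(2) by blast
    then have "card W \<noteq> 1" using HW n0W by (metis card_1_singletonE singletonD)
    then have "j \<noteq> 0" using j by auto
    then have pW: "p dvd card W" using j by (simp add: dvd_power)
    define b where "b = multiplicity p (card H)"
    have cH0: "card H \<noteq> 0" using subgroup.finite_imp_card_positive[OF H fY] by simp
    have np: "\<not> is_unit p" using p1 by simp
    have b1: "b \<ge> 1" unfolding b_def using multiplicity_gt_zero_iff[OF cH0 np] pH by simp
    have grpH: "group (Y\<lparr>carrier := H\<rparr>)" using Y.subgroup_imp_group[OF H] .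
    have "p ^ b dvd card H" unfolding b_def by (rule multiplicity_dvd)
    then obtain m where m: "card H = p ^ b * m" by blast
    have "sylow (Y\<lparr>carrier := H\<rparr>) p b m"
      unfolding sylow_eq sylow_axioms_def using grpH p m fH by (simp add: order_def)
    then obtain P where P: "subgroup P (Y\<lparr>carrier := H\<rparr>)" "card P = p ^ b"
      using sylow.sylow_thm by blast
    have PY: "subgroup P Y" using Y.incl_subgroup[OF H P(1)] .
    have PH: "P \<subseteq> H" using subgroup.subset[OF P(1)] by simp
    have pP: "p dvd card P" using P(2) b1 by (simp add: dvd_power)
    have grpP: "group (Y\<lparr>carrier := P\<rparr>)" using Y.subgroup_imp_group[OF PY] .
    have idh: "(\<lambda>x. x) \<in> hom (Y\<lparr>carrier := P\<rparr>) Y"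
      unfolding hom_def using subgroup.subset[OF PY] by auto
    have act2: "group_action (Y\<lparr>carrier := P\<rparr>) W (\<lambda>x. \<lambda>A\<in>W. x <#\<^bsub>Y\<^esub> A)"
    proof (rule lmult_action[OF Y grpP idh Wsub])
      fix x A assume x: "x \<in> carrier (Y\<lparr>carrier := P\<rparr>)" and A: "A \<in> W"
      have xP: "x \<in> P" using x by simp
      have xH: "x \<in> H" using xP PH by blast
      have xc: "x \<in> carrier Y" using subgroup.mem_carrier[OF PY xP] .
      obtain r where r: "r \<in> carrier Q" "A = h r <#\<^bsub>Y\<^esub> H" using A unfolding W_def by blast
      have hr: "h r \<in> carrier Y" using r(1) by simp
      have "x \<otimes>\<^bsub>Y\<^esub> h r \<otimes>\<^bsub>Y\<^esub> inv\<^bsub>Y\<^esub> x \<in> h ` carrier Q" using nrm[OF xc r(1)] .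
      then obtain r' where r': "r' \<in> carrier Q" "h r' = x \<otimes>\<^bsub>Y\<^esub> h r \<otimes>\<^bsub>Y\<^esub> inv\<^bsub>Y\<^esub> x" by force
      have xHH: "x <#\<^bsub>Y\<^esub> H = H" using lcos_in_sub[OF Y H xH] .
      have "h r' <#\<^bsub>Y\<^esub> H = h r' <#\<^bsub>Y\<^esub> (x <#\<^bsub>Y\<^esub> H)" using xHH by simp
      also have "\<dots> = (h r' \<otimes>\<^bsub>Y\<^esub> x) <#\<^bsub>Y\<^esub> H" using Y.lcos_m_assoc[OF Hc _ xc] r'(1) by simp
      also have "h r' \<otimes>\<^bsub>Y\<^esub> x = x \<otimes>\<^bsub>Y\<^esub> h r"
        using r'(2) xc hr by (simp add: Y.m_assoc)
      also have "(x \<otimes>\<^bsub>Y\<^esub> h r) <#\<^bsub>Y\<^esub> H = x <#\<^bsub>Y\<^esub> A"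
        using r(2) Y.lcos_m_assoc[OF Hc xc hr] by simp
      finally have "x <#\<^bsub>Y\<^esub> A = h r' <#\<^bsub>Y\<^esub> H" by simp
      then show "x <#\<^bsub>Y\<^esub> A \<in> W" unfolding W_def using r'(1) by blast
    qed
    interpret act2: group_action "Y\<lparr>carrier := P\<rparr>" W "\<lambda>x. \<lambda>A\<in>W. x <#\<^bsub>Y\<^esub> A" by fact
    define Fx where "Fx = {A\<in>W. \<forall>x\<in>carrier (Y\<lparr>carrier := P\<rparr>). (\<lambda>A\<in>W. x <#\<^bsub>Y\<^esub> A) A = A}"
    have fP: "finite (carrier (Y\<lparr>carrier := P\<rparr>))" using fY subgroup.subset[OF PY] finite_subset by auto
    have "card W mod p = card Fx mod p" unfolding Fx_def
      by (rule act2.fix_mod[OF fP fW _ p]) (simp add: P(2))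
    then have pF: "p dvd card Fx" using pW by (simp add: mod_eq_0_iff_dvd[symmetric])
    have HF: "H \<in> Fx"
    proof -
      have "x <#\<^bsub>Y\<^esub> H = H" if "x \<in> P" for x using lcos_in_sub[OF Y H] that PH by blast
      then show ?thesis unfolding Fx_def using HW by simp
    qed
    have fF: "finite Fx" using fW unfolding Fx_def by simp
    have "card Fx \<noteq> 1"
    proof
      assume "card Fx = 1"
      then show False using pF p1 by simp
    qed
    have "Fx - {H} \<noteq> {}"
    proof
      assume "Fx - {H} = {}"
      then have "Fx = {H}" using HF by blast
      then show False using \<open>card Fx \<noteq> 1\<close> by simp
    qed
    then obtain A where A: "A \<in> Fx" "A \<noteq> H" by blast
    then have AW: "A \<in> W" unfolding Fx_def by simp
    then obtain r where r: "r \<in> carrier Q" "A = h r <#\<^bsub>Y\<^esub> H" unfolding W_def by blast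
    define n where "n = h r"
    have nc: "n \<in> carrier Y" unfolding n_def using r(1) by simp
    have nH: "n \<notin> H"
    proof
      assume "n \<in> H"
      then have "n <#\<^bsub>Y\<^esub> H = H" using lcos_in_sub[OF Y H] by blast
      then show False using A(2) r(2) unfolding n_def by simp
    qed
    have fixA: "x <#\<^bsub>Y\<^esub> A = A" if "x \<in> P" for x
      using A(1) that AW unfolding Fx_def by simp
    have "P \<subseteq> n <#\<^bsub>Y\<^esub> H #>\<^bsub>Y\<^esub> inv\<^bsub>Y\<^esub> n"
    proof
      fix x assume xP: "x \<in> P"
      have xc: "x \<in> carrier Y" using subgroup.mem_carrier[OF PY xP] .
      have "x \<otimes>\<^bsub>Y\<^esub> n \<in> x <#\<^bsub>Y\<^esub> A"
        using Y.lcos_self[OF nc H] r(2) unfolding n_def l_coset_def by blast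
      then have "x \<otimes>\<^bsub>Y\<^esub> n \<in> n <#\<^bsub>Y\<^esub> H" using fixA[OF xP] r(2) unfolding n_def by simp
      then obtain y where y: "y \<in> H" "x \<otimes>\<^bsub>Y\<^esub> n = n \<otimes>\<^bsub>Y\<^esub> y" unfolding l_coset_def by blast
      have yc: "y \<in> carrier Y" using subgroup.mem_carrier[OF H y(1)] .
      have "x = x \<otimes>\<^bsub>Y\<^esub> n \<otimes>\<^bsub>Y\<^esub> inv\<^bsub>Y\<^esub> n" using xc nc by (simp add: Y.m_assoc)
      also have "\<dots> = n \<otimes>\<^bsub>Y\<^esub> y \<otimes>\<^bsub>Y\<^esub> inv\<^bsub>Y\<^esub> n" using y(2) by simp
      finally show "x \<in> n <#\<^bsub>Y\<^esub> H #>\<^bsub>Y\<^esub> inv\<^bsub>Y\<^esub> n" using y(1) by (rule mem_conj)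
    qed
    then have "P \<subseteq> H \<inter> (n <#\<^bsub>Y\<^esub> H #>\<^bsub>Y\<^esub> inv\<^bsub>Y\<^esub> n)" using PH by blast
    then have "card P dvd card (H \<inter> (n <#\<^bsub>Y\<^esub> H #>\<^bsub>Y\<^esub> inv\<^bsub>Y\<^esub> n))"
      by (rule sub_card_dvd[OF Y PY conjsub[OF nc]])
    then have "p dvd card (H \<inter> (n <#\<^bsub>Y\<^esub> H #>\<^bsub>Y\<^esub> inv\<^bsub>Y\<^esub> n))" using pP dvd_trans by blast
    then show False using emb nc nH by blast
  qed
qed



locale ess =
  fixes p :: nat and S :: "'a monoid" and F :: "'a fusion" and E :: "'a set"
  assumes prime: "Factorial_Ring.prime p"
    and pg: "p_group p S"
    and cl2: "nilpotency_class S 2"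
    and sat: "saturated p S F"
    and es: "essential p S F E"
begin

lemma grp: "group S" using pg unfolding p_group_def by simp
lemma finS: "finite (carrier S)" using pg unfolding p_group_def by simp

sublocale S: group S by (rule grp)

lemma fs: "fusion_system S F" using sat unfolding saturated_def by simp
lemma Esub: "subgroup E S" using es unfolding essential_def by simp
lemma Ec: "E \<subseteq> carrier S" using subgroup.subset[OF Esub] .
lemma finE: "finite E" using finS Ec finite_subset by blast
lemma memc: "x \<in> E \<Longrightarrow> x \<in> carrier S" using Ec by blast

lemma homS_F: "subgroup P S \<Longrightarrow> subgroup Q S \<Longrightarrow> hom_S S P Q \<subseteq> F P Q"
  using fs unfolding fusion_system_def by blast
lemma F_inj: "subgroup P S \<Longrightarrow> subgroup Q S \<Longrightarrow> F P Q \<subseteq> inj_maps S P Q"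
  using fs unfolding fusion_system_def by blast

lemma cmap_one: "cmap S \<one>\<^bsub>S\<^esub> E = (\<lambda>x\<in>E. x)"
  unfolding cmap_def by (rule restrict_ext) (simp add: memc)

lemma centE: "centraliser S E \<subseteq> E"
proof -
  have cent: "F_centric S F E" using es unfolding essential_def by simp
  have "cmap S \<one>\<^bsub>S\<^esub> E ` E \<subseteq> carrier S" unfolding cmap_one using Ec by simp
  then have "cmap S \<one>\<^bsub>S\<^esub> E \<in> hom_S S E (carrier S)"
    unfolding hom_S_def using S.one_closed by blast
  then have "cmap S \<one>\<^bsub>S\<^esub> E \<in> F E (carrier S)"
    using homS_F[OF Esub S.subgroup_self] by blast
  moreover have "cmap S \<one>\<^bsub>S\<^esub> E ` E = E" unfolding cmap_one by simp
  ultimately show ?thesis using cent unfolding F_centric_def by metis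
qed

text \<open>class two: commutators are central\<close>
lemma comm_central:
  assumes x: "x \<in> carrier S" and y: "y \<in> carrier S" and z: "z \<in> carrier S"
  shows "(x \<otimes>\<^bsub>S\<^esub> y \<otimes>\<^bsub>S\<^esub> inv\<^bsub>S\<^esub> x \<otimes>\<^bsub>S\<^esub> inv\<^bsub>S\<^esub> y) \<otimes>\<^bsub>S\<^esub> z
       = z \<otimes>\<^bsub>S\<^esub> (x \<otimes>\<^bsub>S\<^esub> y \<otimes>\<^bsub>S\<^esub> inv\<^bsub>S\<^esub> x \<otimes>\<^bsub>S\<^esub> inv\<^bsub>S\<^esub> y)"
proof -
  define k where "k = x \<otimes>\<^bsub>S\<^esub> y \<otimes>\<^bsub>S\<^esub> inv\<^bsub>S\<^esub> x \<otimes>\<^bsub>S\<^esub> inv\<^bsub>S\<^esub> y"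
  have kc: "k \<in> carrier S" unfolding k_def using x y by simp
  have "k \<in> lower_central S (Suc 0)" unfolding k_def using x y
    by (auto intro: generate.incl)
  then have "k \<otimes>\<^bsub>S\<^esub> z \<otimes>\<^bsub>S\<^esub> inv\<^bsub>S\<^esub> k \<otimes>\<^bsub>S\<^esub> inv\<^bsub>S\<^esub> z \<in> lower_central S (Suc (Suc 0))"
    using z by (auto intro: generate.incl)
  moreover have "lower_central S (Suc (Suc 0)) = {\<one>\<^bsub>S\<^esub>}"
    using cl2 unfolding nilpotency_class_def by (simp add: numeral_2_eq_2)
  ultimately have e: "k \<otimes>\<^bsub>S\<^esub> z \<otimes>\<^bsub>S\<^esub> inv\<^bsub>S\<^esub> k \<otimes>\<^bsub>S\<^esub> inv\<^bsub>S\<^esub> z = \<one>\<^bsub>S\<^esub>" by simp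
  have "k \<otimes>\<^bsub>S\<^esub> z = (k \<otimes>\<^bsub>S\<^esub> z \<otimes>\<^bsub>S\<^esub> inv\<^bsub>S\<^esub> k \<otimes>\<^bsub>S\<^esub> inv\<^bsub>S\<^esub> z) \<otimes>\<^bsub>S\<^esub> (z \<otimes>\<^bsub>S\<^esub> k)"
    using kc z by (simp add: S.m_assoc S.mi2)
  also have "\<dots> = z \<otimes>\<^bsub>S\<^esub> k" using e kc z by simp
  finally show ?thesis unfolding k_def .
qed

lemma comm_in_E:
  assumes x: "x \<in> carrier S" and y: "y \<in> carrier S"
  shows "x \<otimes>\<^bsub>S\<^esub> y \<otimes>\<^bsub>S\<^esub> inv\<^bsub>S\<^esub> x \<otimes>\<^bsub>S\<^esub> inv\<^bsub>S\<^esub> y \<in> E"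
proof -
  have "x \<otimes>\<^bsub>S\<^esub> y \<otimes>\<^bsub>S\<^esub> inv\<^bsub>S\<^esub> x \<otimes>\<^bsub>S\<^esub> inv\<^bsub>S\<^esub> y \<in> centraliser S E"
    unfolding centraliser_def using x y comm_central memc by simp
  then show ?thesis using centE by blast
qed

lemma comm_in_ZE:
  assumes x: "x \<in> carrier S" and y: "y \<in> carrier S"
  shows "x \<otimes>\<^bsub>S\<^esub> y \<otimes>\<^bsub>S\<^esub> inv\<^bsub>S\<^esub> x \<otimes>\<^bsub>S\<^esub> inv\<^bsub>S\<^esub> y \<in> centre S E"
  unfolding centre_def using comm_in_E[OF x y] comm_central[OF x y] memc by simp

lemma E_normal: "E \<lhd> S"
  unfolding S.normal_inv_iff
proof (intro conjI ballI)
  show "subgroup E S" by (rule Esub)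
  fix s e assume s: "s \<in> carrier S" and e: "e \<in> E"
  have ec: "e \<in> carrier S" using memc[OF e] .
  have "s \<otimes>\<^bsub>S\<^esub> e \<otimes>\<^bsub>S\<^esub> inv\<^bsub>S\<^esub> s
     = (s \<otimes>\<^bsub>S\<^esub> e \<otimes>\<^bsub>S\<^esub> inv\<^bsub>S\<^esub> s \<otimes>\<^bsub>S\<^esub> inv\<^bsub>S\<^esub> e) \<otimes>\<^bsub>S\<^esub> e"
    using s ec by (simp add: S.m_assoc)
  moreover have "(s \<otimes>\<^bsub>S\<^esub> e \<otimes>\<^bsub>S\<^esub> inv\<^bsub>S\<^esub> s \<otimes>\<^bsub>S\<^esub> inv\<^bsub>S\<^esub> e) \<otimes>\<^bsub>S\<^esub> e \<in> E"
    using subgroup.m_closed[OF Esub comm_in_E[OF s ec] e] .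
  ultimately show "s \<otimes>\<^bsub>S\<^esub> e \<otimes>\<^bsub>S\<^esub> inv\<^bsub>S\<^esub> s \<in> E" by simp
qed

lemma conj_E: "s \<in> carrier S \<Longrightarrow> e \<in> E \<Longrightarrow> inv\<^bsub>S\<^esub> s \<otimes>\<^bsub>S\<^esub> e \<otimes>\<^bsub>S\<^esub> s \<in> E"
  using E_normal unfolding S.normal_inv_iff by (metis S.inv_closed S.inv_inv)

lemma cmap_FEE: assumes s: "s \<in> carrier S" shows "cmap S s E \<in> F E E"
proof -
  have "cmap S s E ` E \<subseteq> E" unfolding cmap_def using conj_E[OF s] by auto
  then have "cmap S s E \<in> hom_S S E E" unfolding hom_S_def using s by blast
  then show ?thesis using homS_F[OF Esub Esub] by blast
qed

lemma cmap_app: "x \<in> E \<Longrightarrow> cmap S s E x = inv\<^bsub>S\<^esub> s \<otimes>\<^bsub>S\<^esub> x \<otimes>\<^bsub>S\<^esub> s"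
  unfolding cmap_def by simp

lemma SE_grp: "group (S\<lparr>carrier := E\<rparr>)" using S.subgroup_imp_group[OF Esub] .

lemma FEE_props:
  assumes a: "\<alpha> \<in> F E E"
  shows "\<alpha> \<in> extensional E" "\<alpha> \<in> hom (S\<lparr>carrier := E\<rparr>) (S\<lparr>carrier := E\<rparr>)" "inj_on \<alpha> E"
  using F_inj[OF Esub Esub] a unfolding inj_maps_def by auto

lemma a_in: "\<alpha> \<in> F E E \<Longrightarrow> x \<in> E \<Longrightarrow> \<alpha> x \<in> E"
  using FEE_props(2) unfolding hom_def by fastforce

lemma a_mult: "\<alpha> \<in> F E E \<Longrightarrow> x \<in> E \<Longrightarrow> y \<in> E \<Longrightarrow> \<alpha> (x \<otimes>\<^bsub>S\<^esub> y) = \<alpha> x \<otimes>\<^bsub>S\<^esub> \<alpha> y"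
  using FEE_props(2) unfolding hom_def by fastforce

lemma a_grphom: "\<alpha> \<in> F E E \<Longrightarrow> group_hom (S\<lparr>carrier := E\<rparr>) (S\<lparr>carrier := E\<rparr>) \<alpha>"
  using FEE_props(2) SE_grp unfolding group_hom_def group_hom_axioms_def by blast

lemma a_one: "\<alpha> \<in> F E E \<Longrightarrow> \<alpha> \<one>\<^bsub>S\<^esub> = \<one>\<^bsub>S\<^esub>"
  using group_hom.hom_one[OF a_grphom] by simp

lemma a_inv: assumes a: "\<alpha> \<in> F E E" and x: "x \<in> E"
  shows "\<alpha> (inv\<^bsub>S\<^esub> x) = inv\<^bsub>S\<^esub> (\<alpha> x)"
proof -
  have "\<alpha> (inv\<^bsub>S\<lparr>carrier := E\<rparr>\<^esub> x) = inv\<^bsub>S\<lparr>carrier := E\<rparr>\<^esub> (\<alpha> x)"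
    using group_hom.hom_inv[OF a_grphom[OF a]] x by simp
  then show ?thesis using S.m_inv_consistent[OF Esub x] S.m_inv_consistent[OF Esub a_in[OF a x]] by simp
qed

lemma a_surj: "\<alpha> \<in> F E E \<Longrightarrow> \<alpha> ` E = E"
  using endo_inj_surj[OF finE _ FEE_props(3)] a_in by blast

lemma FEE_Bij: "\<alpha> \<in> F E E \<Longrightarrow> \<alpha> \<in> Bij E"
  unfolding Bij_def bij_betw_def using FEE_props(1,3) a_surj by blast

lemma id_FEE: "(\<lambda>x\<in>E. x) \<in> F E E"
proof -
  have "cmap S \<one>\<^bsub>S\<^esub> E \<in> F E E" using cmap_FEE[OF S.one_closed] .
  then show ?thesis unfolding cmap_one .
qed

lemma inv_FEE: "\<alpha> \<in> F E E \<Longrightarrow> restrict (inv_into E \<alpha>) E \<in> F E E"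
  using fs Esub a_surj unfolding fusion_system_def by metis

lemma comp_FEE: "\<alpha> \<in> F E E \<Longrightarrow> \<beta> \<in> F E E \<Longrightarrow> compose E \<alpha> \<beta> \<in> F E E"
  using fs Esub unfolding fusion_system_def by blast

lemma FEE_subgroup: "subgroup (F E E) (BijGroup E)"
proof -
  interpret B: group "BijGroup E" by (rule group_BijGroup)
  show ?thesis
  proof (rule B.subgroupI)
    show "F E E \<subseteq> carrier (BijGroup E)" using FEE_Bij by (auto simp: BijGroup_def)
    show "F E E \<noteq> {}" using id_FEE by blast
    fix a assume a: "a \<in> F E E"
    show "inv\<^bsub>BijGroup E\<^esub> a \<in> F E E" using inv_BijGroup[OF FEE_Bij[OF a]] inv_FEE[OF a]
      by (simp add: restrict_def)
    fix b assume b: "b \<in> F E E"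
    show "a \<otimes>\<^bsub>BijGroup E\<^esub> b \<in> F E E"
      using FEE_Bij[OF a] FEE_Bij[OF b] comp_FEE[OF a b] by (simp add: BijGroup_def)
  qed
qed

abbreviation A where "A \<equiv> aut_F F E"

lemma A_eq: "A = (BijGroup E)\<lparr>carrier := F E E\<rparr>" unfolding aut_F_def ..
lemma A_carrier[simp]: "carrier A = F E E" unfolding aut_F_def by simp
lemma A_grp: "group A" unfolding A_eq using group.subgroup_imp_group[OF group_BijGroup FEE_subgroup] .
sublocale A: group A by (rule A_grp)

lemma A_mult: "\<alpha> \<in> F E E \<Longrightarrow> \<beta> \<in> F E E \<Longrightarrow> \<alpha> \<otimes>\<^bsub>A\<^esub> \<beta> = compose E \<alpha> \<beta>"
  unfolding aut_F_def using FEE_Bij by (simp add: BijGroup_def)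
lemma A_app: "\<alpha> \<in> F E E \<Longrightarrow> \<beta> \<in> F E E \<Longrightarrow> x \<in> E \<Longrightarrow> (\<alpha> \<otimes>\<^bsub>A\<^esub> \<beta>) x = \<alpha> (\<beta> x)"
  using A_mult by (simp add: compose_def)
lemma A_one: "\<one>\<^bsub>A\<^esub> = (\<lambda>x\<in>E. x)" unfolding aut_F_def by (simp add: BijGroup_def)

lemma A_inv1: assumes a: "\<alpha> \<in> F E E" and x: "x \<in> E"
  shows "\<alpha> ((inv\<^bsub>A\<^esub> \<alpha>) x) = x"
proof -
  have ia: "inv\<^bsub>A\<^esub> \<alpha> \<in> F E E" using A.inv_closed[of \<alpha>] a by simp
  have "\<alpha> ((inv\<^bsub>A\<^esub> \<alpha>) x) = (\<alpha> \<otimes>\<^bsub>A\<^esub> inv\<^bsub>A\<^esub> \<alpha>) x"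
    by (rule A_app[OF a ia x, symmetric])
  also have "\<alpha> \<otimes>\<^bsub>A\<^esub> inv\<^bsub>A\<^esub> \<alpha> = \<one>\<^bsub>A\<^esub>" using A.r_inv[of \<alpha>] a by simp
  finally show ?thesis using x by (simp add: A_one)
qed
lemma A_inv2: assumes a: "\<alpha> \<in> F E E" and x: "x \<in> E"
  shows "(inv\<^bsub>A\<^esub> \<alpha>) (\<alpha> x) = x"
proof -
  have ia: "inv\<^bsub>A\<^esub> \<alpha> \<in> F E E" using A.inv_closed[of \<alpha>] a by simp
  have "(inv\<^bsub>A\<^esub> \<alpha>) (\<alpha> x) = (inv\<^bsub>A\<^esub> \<alpha> \<otimes>\<^bsub>A\<^esub> \<alpha>) x"
    by (rule A_app[OF ia a x, symmetric])
  also have "inv\<^bsub>A\<^esub> \<alpha> \<otimes>\<^bsub>A\<^esub> \<alpha> = \<one>\<^bsub>A\<^esub>" using A.l_inv[of \<alpha>] a by simp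
  finally show ?thesis using x by (simp add: A_one)
qed
lemma A_invc: "\<alpha> \<in> F E E \<Longrightarrow> inv\<^bsub>A\<^esub> \<alpha> \<in> F E E"
  using A.inv_closed by simp

lemma FEE_ext: "\<alpha> \<in> F E E \<Longrightarrow> \<beta> \<in> F E E \<Longrightarrow> (\<And>x. x \<in> E \<Longrightarrow> \<alpha> x = \<beta> x) \<Longrightarrow> \<alpha> = \<beta>"
  using FEE_props(1) by (metis extensionalityI)

abbreviation Z where "Z \<equiv> centre S E"

lemma Z_E: "Z \<subseteq> E" unfolding centre_def by blast

lemma Z_sub: "subgroup Z S"
proof (rule S.subgroupI)
  show "Z \<subseteq> carrier S" using Z_E Ec by blast
  show "Z \<noteq> {}" unfolding centre_def using subgroup.one_closed[OF Esub] memc by force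
next
  fix a assume a: "a \<in> Z"
  then have aE: "a \<in> E" and ac: "\<forall>y\<in>E. a \<otimes>\<^bsub>S\<^esub> y = y \<otimes>\<^bsub>S\<^esub> a" unfolding centre_def by auto
  have acs: "a \<in> carrier S" using memc[OF aE] .
  have "inv\<^bsub>S\<^esub> a \<otimes>\<^bsub>S\<^esub> y = y \<otimes>\<^bsub>S\<^esub> inv\<^bsub>S\<^esub> a" if y: "y \<in> E" for y
  proof -
    have yc: "y \<in> carrier S" using memc[OF y] .
    have "inv\<^bsub>S\<^esub> a \<otimes>\<^bsub>S\<^esub> y = inv\<^bsub>S\<^esub> a \<otimes>\<^bsub>S\<^esub> (y \<otimes>\<^bsub>S\<^esub> a) \<otimes>\<^bsub>S\<^esub> inv\<^bsub>S\<^esub> a"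
      using acs yc by (simp add: S.m_assoc)
    also have "\<dots> = inv\<^bsub>S\<^esub> a \<otimes>\<^bsub>S\<^esub> (a \<otimes>\<^bsub>S\<^esub> y) \<otimes>\<^bsub>S\<^esub> inv\<^bsub>S\<^esub> a" using ac y by simp
    also have "\<dots> = y \<otimes>\<^bsub>S\<^esub> inv\<^bsub>S\<^esub> a" using acs yc by (simp add: S.mi2)
    finally show ?thesis .
  qed
  then show "inv\<^bsub>S\<^esub> a \<in> Z" unfolding centre_def using subgroup.m_inv_closed[OF Esub aE] by simp
next
  fix a b assume a: "a \<in> Z" and b: "b \<in> Z"
  then have aE: "a \<in> E" and ac: "\<forall>y\<in>E. a \<otimes>\<^bsub>S\<^esub> y = y \<otimes>\<^bsub>S\<^esub> a"
    and bE: "b \<in> E" and bc: "\<forall>y\<in>E. b \<otimes>\<^bsub>S\<^esub> y = y \<otimes>\<^bsub>S\<^esub> b" unfolding centre_def by auto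
  have "a \<otimes>\<^bsub>S\<^esub> b \<otimes>\<^bsub>S\<^esub> y = y \<otimes>\<^bsub>S\<^esub> (a \<otimes>\<^bsub>S\<^esub> b)" if y: "y \<in> E" for y
  proof -
    have "a \<otimes>\<^bsub>S\<^esub> b \<otimes>\<^bsub>S\<^esub> y = a \<otimes>\<^bsub>S\<^esub> (y \<otimes>\<^bsub>S\<^esub> b)"
      using bc y memc[OF aE] memc[OF bE] memc[OF y] by (simp add: S.m_assoc)
    also have "\<dots> = y \<otimes>\<^bsub>S\<^esub> (a \<otimes>\<^bsub>S\<^esub> b)"
      using ac y memc[OF aE] memc[OF bE] memc[OF y] by (simp add: S.m_assoc[symmetric])
    finally show ?thesis .
  qed
  then show "a \<otimes>\<^bsub>S\<^esub> b \<in> Z" unfolding centre_def using subgroup.m_closed[OF Esub aE bE] by simp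
qed

lemma Z_pres: assumes a: "\<alpha> \<in> F E E" and z: "z \<in> Z" shows "\<alpha> z \<in> Z"
proof -
  have zE: "z \<in> E" and zc: "\<forall>y\<in>E. z \<otimes>\<^bsub>S\<^esub> y = y \<otimes>\<^bsub>S\<^esub> z" using z unfolding centre_def by auto
  have "\<alpha> z \<otimes>\<^bsub>S\<^esub> y = y \<otimes>\<^bsub>S\<^esub> \<alpha> z" if y: "y \<in> E" for y
  proof -
    obtain w where w: "w \<in> E" "y = \<alpha> w" using y a_surj[OF a] by blast
    have "\<alpha> z \<otimes>\<^bsub>S\<^esub> \<alpha> w = \<alpha> (z \<otimes>\<^bsub>S\<^esub> w)" using a_mult[OF a zE w(1)] by simp
    also have "\<dots> = \<alpha> (w \<otimes>\<^bsub>S\<^esub> z)" using zc w(1) by simp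
    also have "\<dots> = \<alpha> w \<otimes>\<^bsub>S\<^esub> \<alpha> z" using a_mult[OF a w(1) zE] .
    finally show ?thesis using w(2) by simp
  qed
  then show ?thesis unfolding centre_def using a_in[OF a zE] by simp
qed

lemma Zc: "z \<in> Z \<Longrightarrow> z \<in> carrier S" using Z_E memc by blast
lemma Z_comm: "z \<in> Z \<Longrightarrow> y \<in> E \<Longrightarrow> z \<otimes>\<^bsub>S\<^esub> y = y \<otimes>\<^bsub>S\<^esub> z" unfolding centre_def by blast

lemma split_inv: "u \<in> carrier S \<Longrightarrow> v \<in> carrier S \<Longrightarrow> w \<in> carrier S \<Longrightarrow>
   inv\<^bsub>S\<^esub> u \<otimes>\<^bsub>S\<^esub> w = (inv\<^bsub>S\<^esub> u \<otimes>\<^bsub>S\<^esub> v) \<otimes>\<^bsub>S\<^esub> (inv\<^bsub>S\<^esub> v \<otimes>\<^bsub>S\<^esub> w)"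
  by (simp add: S.m_assoc S.mi1)

definition K where "K = {\<alpha> \<in> F E E. \<forall>x\<in>E. inv\<^bsub>S\<^esub> x \<otimes>\<^bsub>S\<^esub> \<alpha> x \<in> Z}"

lemma K_sub: "subgroup K A"
proof (rule A.subgroupI)
  show "K \<subseteq> carrier A" unfolding K_def by auto
  have "(\<lambda>x\<in>E. x) \<in> K" unfolding K_def using id_FEE memc subgroup.one_closed[OF Z_sub] by simp
  then show "K \<noteq> {}" by blast
next
  fix a assume a: "a \<in> K"
  then have aF: "a \<in> F E E" and az: "\<forall>x\<in>E. inv\<^bsub>S\<^esub> x \<otimes>\<^bsub>S\<^esub> a x \<in> Z" unfolding K_def by auto
  have ia: "inv\<^bsub>A\<^esub> a \<in> F E E" using A_invc[OF aF] .
  have "inv\<^bsub>S\<^esub> x \<otimes>\<^bsub>S\<^esub> (inv\<^bsub>A\<^esub> a) x \<in> Z" if x: "x \<in> E" for x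
  proof -
    define y where "y = (inv\<^bsub>A\<^esub> a) x"
    have yE: "y \<in> E" unfolding y_def using a_in[OF ia x] .
    have ay: "a y = x" unfolding y_def using A_inv1[OF aF x] .
    have "inv\<^bsub>S\<^esub> y \<otimes>\<^bsub>S\<^esub> x \<in> Z" using az yE ay by metis
    then have "inv\<^bsub>S\<^esub> (inv\<^bsub>S\<^esub> y \<otimes>\<^bsub>S\<^esub> x) \<in> Z" using subgroup.m_inv_closed[OF Z_sub] by blast
    moreover have "inv\<^bsub>S\<^esub> (inv\<^bsub>S\<^esub> y \<otimes>\<^bsub>S\<^esub> x) = inv\<^bsub>S\<^esub> x \<otimes>\<^bsub>S\<^esub> y"
      using memc[OF x] memc[OF yE] by (simp add: S.inv_mult_group)
    ultimately show ?thesis unfolding y_def by simp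
  qed
  then show "inv\<^bsub>A\<^esub> a \<in> K" unfolding K_def using ia by simp
next
  fix a b assume a: "a \<in> K" and b: "b \<in> K"
  then have aF: "a \<in> F E E" and az: "\<forall>x\<in>E. inv\<^bsub>S\<^esub> x \<otimes>\<^bsub>S\<^esub> a x \<in> Z"
    and bF: "b \<in> F E E" and bz: "\<forall>x\<in>E. inv\<^bsub>S\<^esub> x \<otimes>\<^bsub>S\<^esub> b x \<in> Z" unfolding K_def by auto
  have "inv\<^bsub>S\<^esub> x \<otimes>\<^bsub>S\<^esub> (a \<otimes>\<^bsub>A\<^esub> b) x \<in> Z" if x: "x \<in> E" for x
  proof -
    have bx: "b x \<in> E" using a_in[OF bF x] .
    have abx: "a (b x) \<in> E" using a_in[OF aF bx] .
    have "inv\<^bsub>S\<^esub> x \<otimes>\<^bsub>S\<^esub> a (b x) = (inv\<^bsub>S\<^esub> x \<otimes>\<^bsub>S\<^esub> b x) \<otimes>\<^bsub>S\<^esub> (inv\<^bsub>S\<^esub> (b x) \<otimes>\<^bsub>S\<^esub> a (b x))"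
      using split_inv memc x bx abx by blast
    moreover have "(inv\<^bsub>S\<^esub> x \<otimes>\<^bsub>S\<^esub> b x) \<otimes>\<^bsub>S\<^esub> (inv\<^bsub>S\<^esub> (b x) \<otimes>\<^bsub>S\<^esub> a (b x)) \<in> Z"
      using subgroup.m_closed[OF Z_sub] az bz x bx by blast
    ultimately show ?thesis using A_app[OF aF bF x] by simp
  qed
  then show "a \<otimes>\<^bsub>A\<^esub> b \<in> K" unfolding K_def using A.m_closed[of a b] aF bF by simp
qed

lemma conj_app: assumes g: "\<gamma> \<in> F E E" and q: "q \<in> F E E" and x: "x \<in> E"
  shows "(\<gamma> \<otimes>\<^bsub>A\<^esub> q \<otimes>\<^bsub>A\<^esub> inv\<^bsub>A\<^esub> \<gamma>) x = \<gamma> (q ((inv\<^bsub>A\<^esub> \<gamma>) x))"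
proof -
  have ig: "inv\<^bsub>A\<^esub> \<gamma> \<in> F E E" using A_invc[OF g] .
  have gq: "\<gamma> \<otimes>\<^bsub>A\<^esub> q \<in> F E E" using A.m_closed[of \<gamma> q] g q by simp
  show ?thesis using A_app[OF gq ig x] A_app[OF g q a_in[OF ig x]] by simp
qed

lemma K_conj: assumes g: "\<gamma> \<in> F E E" and q: "q \<in> K"
  shows "\<gamma> \<otimes>\<^bsub>A\<^esub> q \<otimes>\<^bsub>A\<^esub> inv\<^bsub>A\<^esub> \<gamma> \<in> K"
proof -
  have qF: "q \<in> F E E" and qz: "\<forall>x\<in>E. inv\<^bsub>S\<^esub> x \<otimes>\<^bsub>S\<^esub> q x \<in> Z" using q unfolding K_def by auto
  have ig: "inv\<^bsub>A\<^esub> \<gamma> \<in> F E E" using A_invc[OF g] .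
  have cF: "\<gamma> \<otimes>\<^bsub>A\<^esub> q \<otimes>\<^bsub>A\<^esub> inv\<^bsub>A\<^esub> \<gamma> \<in> F E E" using A.m_closed g qF ig by simp
  have "inv\<^bsub>S\<^esub> x \<otimes>\<^bsub>S\<^esub> (\<gamma> \<otimes>\<^bsub>A\<^esub> q \<otimes>\<^bsub>A\<^esub> inv\<^bsub>A\<^esub> \<gamma>) x \<in> Z" if x: "x \<in> E" for x
  proof -
    define y where "y = (inv\<^bsub>A\<^esub> \<gamma>) x"
    have yE: "y \<in> E" unfolding y_def using a_in[OF ig x] .
    have gy: "\<gamma> y = x" unfolding y_def using A_inv1[OF g x] .
    define z where "z = inv\<^bsub>S\<^esub> y \<otimes>\<^bsub>S\<^esub> q y"
    have zZ: "z \<in> Z" unfolding z_def using qz yE by blast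
    have zE: "z \<in> E" using zZ Z_E by blast
    have qy: "q y = y \<otimes>\<^bsub>S\<^esub> z" unfolding z_def using memc[OF yE] memc[OF a_in[OF qF yE]] by (simp add: S.mi1)
    have "(\<gamma> \<otimes>\<^bsub>A\<^esub> q \<otimes>\<^bsub>A\<^esub> inv\<^bsub>A\<^esub> \<gamma>) x = \<gamma> (y \<otimes>\<^bsub>S\<^esub> z)"
      using conj_app[OF g qF x] qy unfolding y_def by simp
    also have "\<dots> = x \<otimes>\<^bsub>S\<^esub> \<gamma> z" using a_mult[OF g yE zE] gy by simp
    finally have e: "inv\<^bsub>S\<^esub> x \<otimes>\<^bsub>S\<^esub> (\<gamma> \<otimes>\<^bsub>A\<^esub> q \<otimes>\<^bsub>A\<^esub> inv\<^bsub>A\<^esub> \<gamma>) x = \<gamma> z"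
      using memc[OF x] memc[OF a_in[OF g zE]] by (simp add: S.mi2)
    show ?thesis unfolding e using Z_pres[OF g zZ] .
  qed
  then show ?thesis unfolding K_def using cF by simp
qed

lemma K_normal: "K \<lhd> A"
  unfolding A.normal_inv_iff using K_sub K_conj by simp

lemma autS_K: "aut_S S E \<subseteq> K"
proof
  fix \<alpha> assume "\<alpha> \<in> aut_S S E"
  then obtain g where g: "g \<in> carrier S" "\<alpha> = cmap S g E" unfolding aut_S_def hom_S_def by blast
  have aF: "\<alpha> \<in> F E E" using cmap_FEE[OF g(1)] g(2) by simp
  have "inv\<^bsub>S\<^esub> x \<otimes>\<^bsub>S\<^esub> \<alpha> x \<in> Z" if x: "x \<in> E" for x
  proof -
    have xc: "x \<in> carrier S" using memc[OF x] .
    have "inv\<^bsub>S\<^esub> x \<otimes>\<^bsub>S\<^esub> inv\<^bsub>S\<^esub> g \<otimes>\<^bsub>S\<^esub> inv\<^bsub>S\<^esub> (inv\<^bsub>S\<^esub> x) \<otimes>\<^bsub>S\<^esub> inv\<^bsub>S\<^esub> (inv\<^bsub>S\<^esub> g) \<in> Z"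
      using comm_in_ZE[of "inv\<^bsub>S\<^esub> x" "inv\<^bsub>S\<^esub> g"] xc g(1) by simp
    moreover have "inv\<^bsub>S\<^esub> x \<otimes>\<^bsub>S\<^esub> inv\<^bsub>S\<^esub> g \<otimes>\<^bsub>S\<^esub> inv\<^bsub>S\<^esub> (inv\<^bsub>S\<^esub> x) \<otimes>\<^bsub>S\<^esub> inv\<^bsub>S\<^esub> (inv\<^bsub>S\<^esub> g)
       = inv\<^bsub>S\<^esub> x \<otimes>\<^bsub>S\<^esub> \<alpha> x"
      using xc g by (simp add: cmap_app[OF x] S.m_assoc)
    ultimately show ?thesis by simp
  qed
  then show "\<alpha> \<in> K" unfolding K_def using aF by simp
qed

lemma autS_sylow: "sylow_subgroup p A (aut_S S E)"
proof -
  have "fully_normalized S F E" using es unfolding essential_def by simp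
  then show ?thesis using sat Esub unfolding saturated_def by blast
qed

lemma finA: "finite (carrier A)"
proof -
  have "F E E \<subseteq> PiE E (\<lambda>_. E)"
  proof
    fix a assume a: "a \<in> F E E"
    show "a \<in> PiE E (\<lambda>_. E)" using FEE_props(1)[OF a] a_in[OF a] by (auto simp: PiE_def)
  qed
  moreover have "finite (PiE E (\<lambda>_. E))" using finE by (simp add: finite_PiE)
  ultimately show ?thesis using finite_subset by simp
qed

lemma K_index: "\<not> p dvd (card (carrier A) div card K)"
proof
  assume pd: "p dvd (card (carrier A) div card K)"
  define m where "m = multiplicity p (order A)"
  have syl: "subgroup (aut_S S E) A" "card (aut_S S E) = p ^ m"
    using autS_sylow unfolding sylow_subgroup_def m_def by auto
  have "card (rcosets\<^bsub>A\<^esub> K) * card K = order A" using A.lagrange[OF K_sub] .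
  then have o: "order A = card K * card (rcosets\<^bsub>A\<^esub> K)" by (metis mult.commute)
  have cK: "card K > 0" using subgroup.finite_imp_card_positive[OF K_sub finA] .
  have "card (carrier A) div card K = card (rcosets\<^bsub>A\<^esub> K)" using o cK unfolding order_def by simp
  then obtain r1 where r1: "card (rcosets\<^bsub>A\<^esub> K) = p * r1" using pd by (auto elim: dvdE)
  have "card (aut_S S E) dvd card K" using sub_card_dvd[OF A_grp syl(1) K_sub autS_K] .
  then obtain r2 where r2: "card K = p ^ m * r2" using syl(2) by (auto elim: dvdE)
  have "order A = p ^ Suc m * (r2 * r1)" using o r1 r2 by (simp add: ac_simps)
  then have dv: "p ^ Suc m dvd order A" by simp
  have oA: "order A \<noteq> 0" using finA A.order_gt_0_iff_finite by simp
  have p1: "p > 1" using prime prime_gt_1_nat by blast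
  have "Suc m \<le> multiplicity p (order A)" using multiplicity_geI[OF oA _ dv] p1 by simp
  then show False unfolding m_def by simp
qed

lemma O_K: "O_p'_upper p A \<subseteq> K"
  unfolding O_p'_upper_def using K_normal K_index by blast

lemma gen_Z: assumes G0: "G0 \<subseteq> Z" shows "generate (S\<lparr>carrier := E\<rparr>) G0 \<subseteq> Z"
proof
  fix x assume "x \<in> generate (S\<lparr>carrier := E\<rparr>) G0"
  then show "x \<in> Z"
  proof (induction rule: generate.induct)
    case one
    then show ?case using subgroup.one_closed[OF Z_sub] by simp
  next
    case (incl h)
    then show ?case using G0 by blast
  next
    case (inv h)
    then have hZ: "h \<in> Z" using G0 by blast
    then have hE: "h \<in> E" using Z_E by blast
    show ?case using S.m_inv_consistent[OF Esub hE] subgroup.m_inv_closed[OF Z_sub hZ] by simp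
  next
    case (eng h1 h2)
    then show ?case using subgroup.m_closed[OF Z_sub] by simp
  qed
qed

lemma part2: "action_commutator S (O_p'_upper p A) E \<subseteq> Z"
  unfolding action_commutator_def
proof (rule gen_Z)
  show "{inv\<^bsub>S\<^esub> x \<otimes>\<^bsub>S\<^esub> \<alpha> x |\<alpha> x. \<alpha> \<in> O_p'_upper p A \<and> x \<in> E} \<subseteq> Z"
    using O_K unfolding K_def by blast
qed

definition C where "C = {\<alpha> \<in> K. \<forall>z\<in>Z. \<alpha> z = z}"

lemma C_F: "\<alpha> \<in> C \<Longrightarrow> \<alpha> \<in> F E E" unfolding C_def K_def by simp
lemma C_K: "\<alpha> \<in> C \<Longrightarrow> \<alpha> \<in> K" unfolding C_def by simp
lemma C_fix: "\<alpha> \<in> C \<Longrightarrow> z \<in> Z \<Longrightarrow> \<alpha> z = z" unfolding C_def by simp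
lemma K_Z: "\<alpha> \<in> K \<Longrightarrow> x \<in> E \<Longrightarrow> inv\<^bsub>S\<^esub> x \<otimes>\<^bsub>S\<^esub> \<alpha> x \<in> Z" unfolding K_def by simp

lemma C_sub: "subgroup C A"
proof (rule A.subgroupI)
  show "C \<subseteq> carrier A" unfolding C_def K_def by auto
  have "(\<lambda>x\<in>E. x) \<in> C" unfolding C_def using A.one_closed subgroup.one_closed[OF K_sub] Z_E
    by (auto simp: A_one)
  then show "C \<noteq> {}" by blast
next
  fix a assume a: "a \<in> C"
  have aF: "a \<in> F E E" using C_F[OF a] .
  have "inv\<^bsub>A\<^esub> a \<in> K" using subgroup.m_inv_closed[OF K_sub C_K[OF a]] .
  moreover have "(inv\<^bsub>A\<^esub> a) z = z" if z: "z \<in> Z" for z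
    using A_inv2[OF aF, of z] C_fix[OF a z] z Z_E by auto
  ultimately show "inv\<^bsub>A\<^esub> a \<in> C" unfolding C_def by simp
next
  fix a b assume a: "a \<in> C" and b: "b \<in> C"
  have "a \<otimes>\<^bsub>A\<^esub> b \<in> K" using subgroup.m_closed[OF K_sub C_K[OF a] C_K[OF b]] .
  moreover have "(a \<otimes>\<^bsub>A\<^esub> b) z = z" if z: "z \<in> Z" for z
    using A_app[OF C_F[OF a] C_F[OF b], of z] C_fix[OF a z] C_fix[OF b z] z Z_E by auto
  ultimately show "a \<otimes>\<^bsub>A\<^esub> b \<in> C" unfolding C_def by simp
qed

lemma C_conj: assumes g: "\<gamma> \<in> F E E" and q: "q \<in> C"
  shows "\<gamma> \<otimes>\<^bsub>A\<^esub> q \<otimes>\<^bsub>A\<^esub> inv\<^bsub>A\<^esub> \<gamma> \<in> C"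
proof -
  have "\<gamma> \<otimes>\<^bsub>A\<^esub> q \<otimes>\<^bsub>A\<^esub> inv\<^bsub>A\<^esub> \<gamma> \<in> K" using K_conj[OF g C_K[OF q]] .
  moreover have "(\<gamma> \<otimes>\<^bsub>A\<^esub> q \<otimes>\<^bsub>A\<^esub> inv\<^bsub>A\<^esub> \<gamma>) z = z" if z: "z \<in> Z" for z
  proof -
    have zE: "z \<in> E" using z Z_E by blast
    have "(inv\<^bsub>A\<^esub> \<gamma>) z \<in> Z" using Z_pres[OF A_invc[OF g] z] .
    then have "q ((inv\<^bsub>A\<^esub> \<gamma>) z) = (inv\<^bsub>A\<^esub> \<gamma>) z" using C_fix[OF q] by blast
    then show ?thesis using conj_app[OF g C_F[OF q] zE] A_inv1[OF g zE] by simp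
  qed
  ultimately show ?thesis unfolding C_def by simp
qed

definition Fn :: "('a \<Rightarrow> 'a) monoid" where
  "Fn = \<lparr>carrier = PiE E (\<lambda>_. Z), monoid.mult = (\<lambda>f g. \<lambda>x\<in>E. f x \<otimes>\<^bsub>S\<^esub> g x), one = (\<lambda>x\<in>E. \<one>\<^bsub>S\<^esub>)\<rparr>"

lemma Fn_grp: "group Fn"
proof (rule groupI)
  fix f g assume "f \<in> carrier Fn" "g \<in> carrier Fn"
  then show "f \<otimes>\<^bsub>Fn\<^esub> g \<in> carrier Fn" unfolding Fn_def using subgroup.m_closed[OF Z_sub] by (auto simp: PiE_def)
next
  show "\<one>\<^bsub>Fn\<^esub> \<in> carrier Fn" unfolding Fn_def using subgroup.one_closed[OF Z_sub] by auto
next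
  fix f g k assume f: "f \<in> carrier Fn" and g: "g \<in> carrier Fn" and k: "k \<in> carrier Fn"
  show "f \<otimes>\<^bsub>Fn\<^esub> g \<otimes>\<^bsub>Fn\<^esub> k = f \<otimes>\<^bsub>Fn\<^esub> (g \<otimes>\<^bsub>Fn\<^esub> k)"
  proof -
    have "(\<lambda>x\<in>E. (\<lambda>x\<in>E. f x \<otimes>\<^bsub>S\<^esub> g x) x \<otimes>\<^bsub>S\<^esub> k x) = (\<lambda>x\<in>E. f x \<otimes>\<^bsub>S\<^esub> (\<lambda>x\<in>E. g x \<otimes>\<^bsub>S\<^esub> k x) x)"
    proof (rule restrict_ext)
      fix x assume x: "x \<in> E"
      have "f x \<in> carrier S" "g x \<in> carrier S" "k x \<in> carrier S" using f g k x Zc unfolding Fn_def by auto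
      then show "(\<lambda>x\<in>E. f x \<otimes>\<^bsub>S\<^esub> g x) x \<otimes>\<^bsub>S\<^esub> k x = f x \<otimes>\<^bsub>S\<^esub> (\<lambda>x\<in>E. g x \<otimes>\<^bsub>S\<^esub> k x) x"
        using x by (simp add: S.m_assoc)
    qed
    then show ?thesis unfolding Fn_def by simp
  qed
next
  fix f assume f: "f \<in> carrier Fn"
  show "\<one>\<^bsub>Fn\<^esub> \<otimes>\<^bsub>Fn\<^esub> f = f"
  proof -
    have "(\<lambda>x\<in>E. (\<lambda>x\<in>E. \<one>\<^bsub>S\<^esub>) x \<otimes>\<^bsub>S\<^esub> f x) = f"
    proof (rule extensionalityI[of _ E])
      show "f \<in> extensional E" using f unfolding Fn_def by (simp add: PiE_def)
    next
      fix x assume x: "x \<in> E"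
      have "f x \<in> carrier S" using f x Zc unfolding Fn_def by auto
      then show "(\<lambda>x\<in>E. (\<lambda>x\<in>E. \<one>\<^bsub>S\<^esub>) x \<otimes>\<^bsub>S\<^esub> f x) x = f x" using x by simp
    qed simp
    then show ?thesis unfolding Fn_def by simp
  qed
next
  fix f assume f: "f \<in> carrier Fn"
  show "\<exists>y\<in>carrier Fn. y \<otimes>\<^bsub>Fn\<^esub> f = \<one>\<^bsub>Fn\<^esub>"
  proof
    show "(\<lambda>x\<in>E. inv\<^bsub>S\<^esub> f x) \<in> carrier Fn" using f subgroup.m_inv_closed[OF Z_sub] unfolding Fn_def by (auto simp: PiE_def)
    have "(\<lambda>x\<in>E. (\<lambda>x\<in>E. inv\<^bsub>S\<^esub> f x) x \<otimes>\<^bsub>S\<^esub> f x) = (\<lambda>x\<in>E. \<one>\<^bsub>S\<^esub>)"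
    proof (rule restrict_ext)
      fix x assume x: "x \<in> E"
      have "f x \<in> carrier S" using f x Zc unfolding Fn_def by auto
      then show "(\<lambda>x\<in>E. inv\<^bsub>S\<^esub> f x) x \<otimes>\<^bsub>S\<^esub> f x = \<one>\<^bsub>S\<^esub>" using x by simp
    qed
    then show "(\<lambda>x\<in>E. inv\<^bsub>S\<^esub> f x) \<otimes>\<^bsub>Fn\<^esub> f = \<one>\<^bsub>Fn\<^esub>" unfolding Fn_def by simp
  qed
qed

definition zeta where "zeta \<alpha> = (\<lambda>x\<in>E. inv\<^bsub>S\<^esub> x \<otimes>\<^bsub>S\<^esub> \<alpha> x)"

lemma CA_grp: "group (A\<lparr>carrier := C\<rparr>)" using A.subgroup_imp_group[OF C_sub] .

lemma zeta_hom: "zeta \<in> hom (A\<lparr>carrier := C\<rparr>) Fn"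
proof (rule homI)
  fix a assume "a \<in> carrier (A\<lparr>carrier := C\<rparr>)"
  then have a: "a \<in> C" by simp
  show "zeta a \<in> carrier Fn" unfolding Fn_def zeta_def using K_Z[OF C_K[OF a]] by (auto simp: PiE_def)
next
  fix a b assume "a \<in> carrier (A\<lparr>carrier := C\<rparr>)" "b \<in> carrier (A\<lparr>carrier := C\<rparr>)"
  then have a: "a \<in> C" and b: "b \<in> C" by auto
  have aF: "a \<in> F E E" and bF: "b \<in> F E E" using C_F a b by auto
  have eq: "inv\<^bsub>S\<^esub> x \<otimes>\<^bsub>S\<^esub> (a \<otimes>\<^bsub>A\<^esub> b) x = (inv\<^bsub>S\<^esub> x \<otimes>\<^bsub>S\<^esub> a x) \<otimes>\<^bsub>S\<^esub> (inv\<^bsub>S\<^esub> x \<otimes>\<^bsub>S\<^esub> b x)"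
    if x: "x \<in> E" for x
  proof -
    have xc: "x \<in> carrier S" using memc[OF x] .
    define zb where "zb = inv\<^bsub>S\<^esub> x \<otimes>\<^bsub>S\<^esub> b x"
    have zbZ: "zb \<in> Z" unfolding zb_def using K_Z[OF C_K[OF b] x] .
    have zbE: "zb \<in> E" using zbZ Z_E by blast
    have bx: "b x = x \<otimes>\<^bsub>S\<^esub> zb" unfolding zb_def using xc memc[OF a_in[OF bF x]] by (simp add: S.mi1)
    have "(a \<otimes>\<^bsub>A\<^esub> b) x = a x \<otimes>\<^bsub>S\<^esub> zb"
      using A_app[OF aF bF x] bx a_mult[OF aF x zbE] C_fix[OF a zbZ] by simp
    then show ?thesis
      using xc memc[OF a_in[OF aF x]] memc[OF zbE] unfolding zb_def[symmetric] by (simp add: S.m_assoc)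
  qed
  have "zeta (a \<otimes>\<^bsub>A\<^esub> b) = zeta a \<otimes>\<^bsub>Fn\<^esub> zeta b"
    unfolding zeta_def Fn_def monoid.select_convs
    by (rule restrict_ext) (simp add: eq)
  then show "zeta (a \<otimes>\<^bsub>A\<lparr>carrier := C\<rparr>\<^esub> b) = zeta a \<otimes>\<^bsub>Fn\<^esub> zeta b" by simp
qed

lemma zeta_inj: "inj_on zeta C"
proof (rule inj_onI)
  fix a b assume a: "a \<in> C" and b: "b \<in> C" and e: "zeta a = zeta b"
  show "a = b"
  proof (rule FEE_ext[OF C_F[OF a] C_F[OF b]])
    fix x assume x: "x \<in> E"
    have "inv\<^bsub>S\<^esub> x \<otimes>\<^bsub>S\<^esub> a x = inv\<^bsub>S\<^esub> x \<otimes>\<^bsub>S\<^esub> b x"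
      using fun_cong[OF e, of x] x unfolding zeta_def by simp
    then show "a x = b x" using memc[OF x] memc[OF a_in[OF C_F[OF a] x]] memc[OF a_in[OF C_F[OF b] x]]
      by (metis S.mi1)
  qed
qed

lemma card_C: "\<exists>k. card C = p ^ k"
proof -
  interpret Fn: group Fn by (rule Fn_grp)
  have gh: "group_hom (A\<lparr>carrier := C\<rparr>) Fn zeta"
    using CA_grp Fn_grp zeta_hom unfolding group_hom_def group_hom_axioms_def by blast
  have sg: "subgroup (zeta ` C) Fn" using group_hom.img_is_subgroup[OF gh] by simp
  have d1: "card (zeta ` C) dvd card (carrier Fn)"
    using sub_card_dvd[OF Fn_grp sg Fn.subgroup_self subgroup.subset[OF sg]] .
  have cC: "card C = card (zeta ` C)" using card_image[OF zeta_inj] by simp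
  have cF: "card (carrier Fn) = card Z ^ card E"
  proof -
    have "card (carrier Fn) = card (PiE E (\<lambda>_. Z))" unfolding Fn_def by simp
    also have "\<dots> = (\<Prod>i\<in>E. card Z)" using card_PiE[OF finE] .
    also have "\<dots> = card Z ^ card E" by simp
    finally show ?thesis .
  qed
  obtain n where n: "card (carrier S) = p ^ n" using pg unfolding p_group_def by blast
  have "card Z dvd card (carrier S)" using sub_card_dvd[OF grp Z_sub S.subgroup_self subgroup.subset[OF Z_sub]] .
  then have "card Z dvd p ^ n" using n by simp
  then obtain i where i: "card Z = p ^ i" using divides_primepow_nat[OF prime] by blast
  have "card C dvd p ^ (i * card E)" using d1 unfolding cC cF i by (simp add: power_mult)
  then show ?thesis using divides_primepow_nat[OF prime] by blast
qed

abbreviation I where "I \<equiv> inn S E"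

lemma cmap_mult: assumes g: "g \<in> carrier S" and h: "h \<in> carrier S"
  shows "cmap S g E \<otimes>\<^bsub>A\<^esub> cmap S h E = cmap S (h \<otimes>\<^bsub>S\<^esub> g) E"
proof (rule FEE_ext)
  show "cmap S g E \<otimes>\<^bsub>A\<^esub> cmap S h E \<in> F E E" using A.m_closed[of "cmap S g E" "cmap S h E"] cmap_FEE g h by simp
  show "cmap S (h \<otimes>\<^bsub>S\<^esub> g) E \<in> F E E" using cmap_FEE g h by simp
  fix x assume x: "x \<in> E"
  have xc: "x \<in> carrier S" using memc[OF x] .
  have cx: "cmap S h E x \<in> E" using a_in[OF cmap_FEE[OF h] x] .
  show "(cmap S g E \<otimes>\<^bsub>A\<^esub> cmap S h E) x = cmap S (h \<otimes>\<^bsub>S\<^esub> g) E x"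
    using A_app[OF cmap_FEE[OF g] cmap_FEE[OF h] x] cmap_app[OF x] cmap_app[OF cx] g h xc
    by (simp add: S.m_assoc S.inv_mult_group)
qed

lemma cmap_one': "cmap S \<one>\<^bsub>S\<^esub> E = \<one>\<^bsub>A\<^esub>" using cmap_one A_one by simp

lemma cmap_inv: assumes g: "g \<in> carrier S"
  shows "inv\<^bsub>A\<^esub> (cmap S g E) = cmap S (inv\<^bsub>S\<^esub> g) E"
proof (rule A.inv_equality)
  show "cmap S (inv\<^bsub>S\<^esub> g) E \<otimes>\<^bsub>A\<^esub> cmap S g E = \<one>\<^bsub>A\<^esub>"
    using cmap_mult[of "inv\<^bsub>S\<^esub> g" g] g cmap_one' by simp
  show "cmap S g E \<in> carrier A" using cmap_FEE[OF g] by simp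
  show "cmap S (inv\<^bsub>S\<^esub> g) E \<in> carrier A" using cmap_FEE g by simp
qed

lemma I_sub: "subgroup I A"
proof (rule A.subgroupI)
  show "I \<subseteq> carrier A" unfolding inn_def using cmap_FEE memc by auto
  show "I \<noteq> {}" unfolding inn_def using subgroup.one_closed[OF Esub] by blast
next
  fix a assume "a \<in> I"
  then obtain g where g: "g \<in> E" "a = cmap S g E" unfolding inn_def by blast
  then show "inv\<^bsub>A\<^esub> a \<in> I" unfolding inn_def using cmap_inv[OF memc[OF g(1)]] subgroup.m_inv_closed[OF Esub g(1)] by blast
next
  fix a b assume "a \<in> I" "b \<in> I"
  then obtain g h where g: "g \<in> E" "a = cmap S g E" and h: "h \<in> E" "b = cmap S h E" unfolding inn_def by blast
  then show "a \<otimes>\<^bsub>A\<^esub> b \<in> I" unfolding inn_def using cmap_mult[OF memc[OF g(1)] memc[OF h(1)]] subgroup.m_closed[OF Esub h(1) g(1)] by blast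
qed

lemma I_conj: assumes g: "\<gamma> \<in> F E E" and e: "e \<in> E"
  shows "\<gamma> \<otimes>\<^bsub>A\<^esub> cmap S e E \<otimes>\<^bsub>A\<^esub> inv\<^bsub>A\<^esub> \<gamma> = cmap S (\<gamma> e) E"
proof (rule FEE_ext)
  have ce: "cmap S e E \<in> F E E" using cmap_FEE[OF memc[OF e]] .
  show "\<gamma> \<otimes>\<^bsub>A\<^esub> cmap S e E \<otimes>\<^bsub>A\<^esub> inv\<^bsub>A\<^esub> \<gamma> \<in> F E E"
    using A.m_closed A.inv_closed g ce by simp
  show "cmap S (\<gamma> e) E \<in> F E E" using cmap_FEE[OF memc[OF a_in[OF g e]]] .
  fix x assume x: "x \<in> E"
  define y where "y = (inv\<^bsub>A\<^esub> \<gamma>) x"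
  have yE: "y \<in> E" unfolding y_def using a_in[OF A_invc[OF g] x] .
  have gy: "\<gamma> y = x" unfolding y_def using A_inv1[OF g x] .
  have ie: "inv\<^bsub>S\<^esub> e \<in> E" using subgroup.m_inv_closed[OF Esub e] .
  have iey: "inv\<^bsub>S\<^esub> e \<otimes>\<^bsub>S\<^esub> y \<in> E" using subgroup.m_closed[OF Esub ie yE] .
  have "(\<gamma> \<otimes>\<^bsub>A\<^esub> cmap S e E \<otimes>\<^bsub>A\<^esub> inv\<^bsub>A\<^esub> \<gamma>) x = \<gamma> (inv\<^bsub>S\<^esub> e \<otimes>\<^bsub>S\<^esub> y \<otimes>\<^bsub>S\<^esub> e)"
    using conj_app[OF g ce x] cmap_app[OF yE] unfolding y_def by simp
  also have "\<dots> = \<gamma> (inv\<^bsub>S\<^esub> e) \<otimes>\<^bsub>S\<^esub> \<gamma> y \<otimes>\<^bsub>S\<^esub> \<gamma> e"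
    using a_mult[OF g iey e] a_mult[OF g ie yE] by simp
  also have "\<dots> = cmap S (\<gamma> e) E x" using a_inv[OF g e] gy cmap_app[OF x] by simp
  finally show "(\<gamma> \<otimes>\<^bsub>A\<^esub> cmap S e E \<otimes>\<^bsub>A\<^esub> inv\<^bsub>A\<^esub> \<gamma>) x = cmap S (\<gamma> e) E x" .
qed

lemma I_normal: "I \<lhd> A"
  unfolding A.normal_inv_iff
proof (intro conjI ballI)
  show "subgroup I A" by (rule I_sub)
  fix \<gamma> h assume g: "\<gamma> \<in> carrier A" and h: "h \<in> I"
  then obtain e where e: "e \<in> E" "h = cmap S e E" unfolding inn_def by blast
  show "\<gamma> \<otimes>\<^bsub>A\<^esub> h \<otimes>\<^bsub>A\<^esub> inv\<^bsub>A\<^esub> \<gamma> \<in> I"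
    unfolding e(2) using I_conj[of \<gamma> e] g e(1) a_in[of \<gamma> e] unfolding inn_def by auto
qed

sublocale I: normal I A by (rule I_normal)

abbreviation Yg where "Yg \<equiv> A Mod I"

lemma Y_grp: "group Yg" by (rule I.factorgroup_is_group)

lemma Y_fin: "finite (carrier Yg)" unfolding carrier_FactGroup using finA by simp

lemma pi_hom: "group_hom A Yg (\<lambda>a. I #>\<^bsub>A\<^esub> a)"
  using I.r_coset_hom_Mod A_grp Y_grp unfolding group_hom_def group_hom_axioms_def by blast

lemma C_triv: "(\<lambda>a. I #>\<^bsub>A\<^esub> a) ` C = {\<one>\<^bsub>Yg\<^esub>}"
proof -
  interpret pi: group_hom A Yg "\<lambda>a. I #>\<^bsub>A\<^esub> a" by (rule pi_hom)
  obtain H where H: "strongly_p_embedded p Yg H"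
    using es unfolding essential_def has_strongly_p_embedded_def out_F_def by blast
  obtain k where k: "card C = p ^ k" using card_C by blast
  have h: "(\<lambda>a. I #>\<^bsub>A\<^esub> a) \<in> hom (A\<lparr>carrier := C\<rparr>) Yg"
  proof (rule homI)
    fix a assume "a \<in> carrier (A\<lparr>carrier := C\<rparr>)"
    then have "a \<in> carrier A" using subgroup.subset[OF C_sub] by auto
    then show "I #>\<^bsub>A\<^esub> a \<in> carrier Yg" by simp
  next
    fix a b assume "a \<in> carrier (A\<lparr>carrier := C\<rparr>)" "b \<in> carrier (A\<lparr>carrier := C\<rparr>)"
    then have "a \<in> carrier A" "b \<in> carrier A" using subgroup.subset[OF C_sub] by auto
    then show "I #>\<^bsub>A\<^esub> (a \<otimes>\<^bsub>A\<lparr>carrier := C\<rparr>\<^esub> b) = (I #>\<^bsub>A\<^esub> a) \<otimes>\<^bsub>Yg\<^esub> (I #>\<^bsub>A\<^esub> b)"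
      using pi.hom_mult by simp
  qed
  have nrm: "y \<otimes>\<^bsub>Yg\<^esub> (I #>\<^bsub>A\<^esub> q) \<otimes>\<^bsub>Yg\<^esub> inv\<^bsub>Yg\<^esub> y \<in> (\<lambda>a. I #>\<^bsub>A\<^esub> a) ` carrier (A\<lparr>carrier := C\<rparr>)"
    if y: "y \<in> carrier Yg" and q: "q \<in> carrier (A\<lparr>carrier := C\<rparr>)" for y q
  proof -
    obtain g where g: "g \<in> carrier A" "y = I #>\<^bsub>A\<^esub> g" using y unfolding carrier_FactGroup by blast
    have qC: "q \<in> C" using q by simp
    have qA: "q \<in> carrier A" using qC C_F by simp
    have gq: "g \<otimes>\<^bsub>A\<^esub> q \<in> carrier A" using A.m_closed[OF g(1) qA] .
    have ig: "inv\<^bsub>A\<^esub> g \<in> carrier A" using A.inv_closed[OF g(1)] .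
    have m1: "I #>\<^bsub>A\<^esub> (g \<otimes>\<^bsub>A\<^esub> q \<otimes>\<^bsub>A\<^esub> inv\<^bsub>A\<^esub> g) = (I #>\<^bsub>A\<^esub> (g \<otimes>\<^bsub>A\<^esub> q)) \<otimes>\<^bsub>Yg\<^esub> (I #>\<^bsub>A\<^esub> inv\<^bsub>A\<^esub> g)"
      by (rule pi.hom_mult[OF gq ig])
    have m2: "I #>\<^bsub>A\<^esub> (g \<otimes>\<^bsub>A\<^esub> q) = (I #>\<^bsub>A\<^esub> g) \<otimes>\<^bsub>Yg\<^esub> (I #>\<^bsub>A\<^esub> q)"
      by (rule pi.hom_mult[OF g(1) qA])
    have m3: "I #>\<^bsub>A\<^esub> inv\<^bsub>A\<^esub> g = inv\<^bsub>Yg\<^esub> (I #>\<^bsub>A\<^esub> g)"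
      by (rule pi.hom_inv[OF g(1)])
    have "y \<otimes>\<^bsub>Yg\<^esub> (I #>\<^bsub>A\<^esub> q) \<otimes>\<^bsub>Yg\<^esub> inv\<^bsub>Yg\<^esub> y = I #>\<^bsub>A\<^esub> (g \<otimes>\<^bsub>A\<^esub> q \<otimes>\<^bsub>A\<^esub> inv\<^bsub>A\<^esub> g)"
      by (simp only: m1 m2 m3 g(2))
    moreover have "g \<otimes>\<^bsub>A\<^esub> q \<otimes>\<^bsub>A\<^esub> inv\<^bsub>A\<^esub> g \<in> C" using C_conj g qC by simp
    ultimately show ?thesis by simp
  qed
  have "(\<lambda>a. I #>\<^bsub>A\<^esub> a) ` carrier (A\<lparr>carrier := C\<rparr>) = {\<one>\<^bsub>Yg\<^esub>}"
  proof (rule no_normal_p_img[OF Y_grp Y_fin prime _ _ _ _ CA_grp _ h nrm])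
    show "subgroup H Yg" using H unfolding strongly_p_embedded_def by simp
    show "H \<noteq> carrier Yg" using H unfolding strongly_p_embedded_def by simp
    show "p dvd card H" using H unfolding strongly_p_embedded_def by simp
    show "\<forall>g\<in>carrier Yg - H. \<not> p dvd card (H \<inter> (g <#\<^bsub>Yg\<^esub> H #>\<^bsub>Yg\<^esub> inv\<^bsub>Yg\<^esub> g))"
      using H unfolding strongly_p_embedded_def by simp
    show "card (carrier (A\<lparr>carrier := C\<rparr>)) = p ^ k" using k by simp
  qed
  then show ?thesis by simp
qed

lemma part3: "E = centraliser S Z"
proof
  show "E \<subseteq> centraliser S Z"
    unfolding centraliser_def using memc Z_comm by auto
  show "centraliser S Z \<subseteq> E"
  proof
    fix s assume "s \<in> centraliser S Z"
    then have s: "s \<in> carrier S" and sc: "\<forall>z\<in>Z. s \<otimes>\<^bsub>S\<^esub> z = z \<otimes>\<^bsub>S\<^esub> s"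
      unfolding centraliser_def by auto
    define \<alpha> where "\<alpha> = cmap S s E"
    have aF: "\<alpha> \<in> F E E" unfolding \<alpha>_def using cmap_FEE[OF s] .
    have "cmap S s E ` E \<subseteq> E" using conj_E[OF s] cmap_app by auto
    then have "\<alpha> \<in> aut_S S E" unfolding \<alpha>_def aut_S_def hom_S_def using s by blast
    then have aK: "\<alpha> \<in> K" using autS_K by blast
    have "\<alpha> z = z" if z: "z \<in> Z" for z
    proof -
      have zE: "z \<in> E" using z Z_E by blast
      have "\<alpha> z = inv\<^bsub>S\<^esub> s \<otimes>\<^bsub>S\<^esub> (z \<otimes>\<^bsub>S\<^esub> s)"
        unfolding \<alpha>_def using cmap_app[OF zE] s Zc[OF z] by (simp add: S.m_assoc)
      also have "\<dots> = inv\<^bsub>S\<^esub> s \<otimes>\<^bsub>S\<^esub> (s \<otimes>\<^bsub>S\<^esub> z)" using sc z by simp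
      also have "\<dots> = z" using s Zc[OF z] by (simp add: S.mi2)
      finally show ?thesis .
    qed
    then have aC: "\<alpha> \<in> C" unfolding C_def using aK by simp
    then have "I #>\<^bsub>A\<^esub> \<alpha> \<in> {\<one>\<^bsub>Yg\<^esub>}" using C_triv by blast
    then have "I #>\<^bsub>A\<^esub> \<alpha> = I" by simp
    moreover have "\<alpha> \<in> I #>\<^bsub>A\<^esub> \<alpha>" using A.rcos_self[of \<alpha> I] aF I_sub by simp
    ultimately have "\<alpha> \<in> I" by simp
    then obtain e where e: "e \<in> E" "\<alpha> = cmap S e E" unfolding inn_def by blast
    have ec: "e \<in> carrier S" using memc[OF e(1)] .
    have "(s \<otimes>\<^bsub>S\<^esub> inv\<^bsub>S\<^esub> e) \<otimes>\<^bsub>S\<^esub> x = x \<otimes>\<^bsub>S\<^esub> (s \<otimes>\<^bsub>S\<^esub> inv\<^bsub>S\<^esub> e)" if x: "x \<in> E" for x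
    proof -
      have xc: "x \<in> carrier S" using memc[OF x] .
      have eq: "inv\<^bsub>S\<^esub> s \<otimes>\<^bsub>S\<^esub> x \<otimes>\<^bsub>S\<^esub> s = inv\<^bsub>S\<^esub> e \<otimes>\<^bsub>S\<^esub> x \<otimes>\<^bsub>S\<^esub> e"
        using fun_cong[OF e(2), of x] cmap_app[OF x] unfolding \<alpha>_def by simp
      have "(s \<otimes>\<^bsub>S\<^esub> inv\<^bsub>S\<^esub> e) \<otimes>\<^bsub>S\<^esub> x = s \<otimes>\<^bsub>S\<^esub> (inv\<^bsub>S\<^esub> e \<otimes>\<^bsub>S\<^esub> x \<otimes>\<^bsub>S\<^esub> e) \<otimes>\<^bsub>S\<^esub> inv\<^bsub>S\<^esub> e"
        using s ec xc by (simp add: S.m_assoc)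
      also have "\<dots> = s \<otimes>\<^bsub>S\<^esub> (inv\<^bsub>S\<^esub> s \<otimes>\<^bsub>S\<^esub> x \<otimes>\<^bsub>S\<^esub> s) \<otimes>\<^bsub>S\<^esub> inv\<^bsub>S\<^esub> e" using eq by simp
      also have "\<dots> = x \<otimes>\<^bsub>S\<^esub> (s \<otimes>\<^bsub>S\<^esub> inv\<^bsub>S\<^esub> e)"
        using s ec xc by (simp add: S.m_assoc S.mi1)
      finally show ?thesis .
    qed
    then have "s \<otimes>\<^bsub>S\<^esub> inv\<^bsub>S\<^esub> e \<in> centraliser S E" unfolding centraliser_def using s ec by simp
    then have se: "s \<otimes>\<^bsub>S\<^esub> inv\<^bsub>S\<^esub> e \<in> E" using centE by blast
    have "s = (s \<otimes>\<^bsub>S\<^esub> inv\<^bsub>S\<^esub> e) \<otimes>\<^bsub>S\<^esub> e" using s ec by (simp add: S.m_assoc)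
    then show "s \<in> E" using subgroup.m_closed[OF Esub se e(1)] by simp
  qed
qed

end

theorem mainTheorem18:
  fixes p :: nat and S :: "'a monoid" and F :: "'a fusion" and E :: "'a set"
  assumes "Factorial_Ring.prime p"
    and "p_group p S"
    and "nilpotency_class S 2"
    and "saturated p S F"
    and "essential p S F E"
  shows "E \<lhd> S \<and>
         action_commutator S (O_p'_upper p (aut_F F E)) E \<subseteq> centre S E \<and>
         E = centraliser S (centre S E)"
proof -
  interpret ess p S F E using assms by (unfold_locales)
  show ?thesis using E_normal part2 part3 by blast
qed

end
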